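(* There is an absolute constant $C>0$ such that the following holds. Let $n,d,k\ge 1$, let $\phi:\mathbb{R}\to\mathbb{R}$ be $L$-Lipschitz with $\phi(0)=0$, let $b>0$, and let $x_1,\dots,x_n,x'_1,\dots,x'_n\in\mathbb{R}^d$ satisfy $\|x_i\|_2\le b$ and $\|x'_i\|_2\le b$ for all $i$. For $a,a'>0$ let $\mathcal{J}^k_{a,a'}=\{A\in\mathbb{R}^{d\times k} : \|A\|_{2,1}\le a,\ \|A\|_{op}\le a'\}$. Then $$\widehat{\mathfrak{R}}\big(\mathcal{F}_k(\mathcal{J}^k_{a,a'})\big)\le C\left(\frac1n+\frac{a\,a'\,b^2L^2}{k\sqrt n}\sqrt{\log(2dk)}\,\log\Big(2+\frac{n\,b^2a'^2L^2}{k}\Big)\right).$$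
   Context: For $A\in\mathbb{R}^{d\times k}$ with columns $A_{\cdot 1},\dots,A_{\cdot k}$: $\|A\|_{2,1}=\sum_{j=1}^k\|A_{\cdot j}\|_2$, $\|A\|_{2,\infty}=\max_{j\le k}\|A_{\cdot j}\|_2$, and $\|A\|_{op}$ is the spectral norm. For $u,v\in\mathbb{R}^k$, $\zeta_k(u,v)=\frac1k\|u-v\|_2^2$. The function $\phi$ is applied coordinatewise to vectors. Given fixed points $x_1,\dots,x_n,x'_1,\dots,x'_n\in\mathbb{R}^d$ and a set $\mathcal{G}\subset\mathbb{R}^{d\times k}$, define $\mathcal{F}_k(\mathcal{G})=\{(\zeta_k(\phi(A^tx_i),\phi(A^tx'_i)))_{i=1}^n : A\in\mathcal{G}\}\subset\mathbb{R}^n$. For a set $\mathcal{F}\subset\mathbb{R}^n$, the empirical Rademacher complexity is $\widehat{\mathfrak{R}}(\mathcal{F})=\frac1n\mathbb{E}_\varepsilon\sup_{f\in\mathcal{F}}\sum_{i=1}^n\varepsilon_if_i$, where $\varepsilon_1,\dots,\varepsilon_n$ are i.i.d. uniform on $\{-1,1\}$. *)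

theory Defs
  imports "HOL-Analysis.Analysis"
begin

(* Vectors in R^m are represented as functions nat => real, only indices < m matter.
   Matrices in R^{d x k} are functions nat => nat => real, A i j with i < d, j < k. *)

definition vnorm :: "nat \<Rightarrow> (nat \<Rightarrow> real) \<Rightarrow> real" where
  "vnorm m v = sqrt (\<Sum>i<m. (v i)\<^sup>2)"

definition matT_apply :: "nat \<Rightarrow> (nat \<Rightarrow> nat \<Rightarrow> real) \<Rightarrow> (nat \<Rightarrow> real) \<Rightarrow> (nat \<Rightarrow> real)" where
  "matT_apply d A v = (\<lambda>j. \<Sum>i<d. A i j * v i)"

definition mat_apply :: "nat \<Rightarrow> (nat \<Rightarrow> nat \<Rightarrow> real) \<Rightarrow> (nat \<Rightarrow> real) \<Rightarrow> (nat \<Rightarrow> real)" where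
  "mat_apply k A y = (\<lambda>i. \<Sum>j<k. A i j * y j)"

definition norm21 :: "nat \<Rightarrow> nat \<Rightarrow> (nat \<Rightarrow> nat \<Rightarrow> real) \<Rightarrow> real" where
  "norm21 d k A = (\<Sum>j<k. vnorm d (\<lambda>i. A i j))"

definition opnorm :: "nat \<Rightarrow> nat \<Rightarrow> (nat \<Rightarrow> nat \<Rightarrow> real) \<Rightarrow> real" where
  "opnorm d k A = Sup {vnorm d (mat_apply k A y) | y. vnorm k y \<le> 1}"

definition zeta :: "nat \<Rightarrow> (nat \<Rightarrow> real) \<Rightarrow> (nat \<Rightarrow> real) \<Rightarrow> real" where
  "zeta k u v = (1 / real k) * (\<Sum>j<k. (u j - v j)\<^sup>2)"

(* F_k(G): vectors indexed by i < n (entries i >= n are irrelevant) *)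
definition Fk :: "nat \<Rightarrow> nat \<Rightarrow> (real \<Rightarrow> real) \<Rightarrow> (nat \<Rightarrow> nat \<Rightarrow> real)
                   \<Rightarrow> (nat \<Rightarrow> nat \<Rightarrow> real) \<Rightarrow> (nat \<Rightarrow> nat \<Rightarrow> real) set \<Rightarrow> (nat \<Rightarrow> real) set" where
  "Fk d k \<phi> x x' G =
     (\<lambda>A. (\<lambda>i. zeta k (\<lambda>j. \<phi> (matT_apply d A (x i) j)) (\<lambda>j. \<phi> (matT_apply d A (x' i) j)))) ` G"

definition Jset :: "nat \<Rightarrow> nat \<Rightarrow> real \<Rightarrow> real \<Rightarrow> (nat \<Rightarrow> nat \<Rightarrow> real) set" where
  "Jset d k a a' = {A. norm21 d k A \<le> a \<and> opnorm d k A \<le> a'}"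

definition rademacher :: "nat \<Rightarrow> (nat \<Rightarrow> real) set \<Rightarrow> real" where
  "rademacher n F = (1 / real n) *
     ((\<Sum>\<epsilon>\<in>PiE {..<n} (\<lambda>_. {-1, 1::real}). Sup ((\<lambda>f. \<Sum>i<n. \<epsilon> i * f i) ` F)) / 2 ^ n)"

end

theory Submission
  imports Defs "HOL-Probability.Hoeffding"
begin


definition avg :: "'a set \<Rightarrow> ('a \<Rightarrow> real) \<Rightarrow> real" where
  "avg P h = (\<Sum>p\<in>P. h p) / real (card P)"

abbreviation sg :: "'a set \<Rightarrow> ('a \<Rightarrow> real) set" where
  "sg S \<equiv> PiE S (\<lambda>_. {-1, 1::real})"

lemma avg_split:
  assumes "i \<notin> J" "finite J" "\<And>j. finite (T j)"
  shows "avg (PiE (insert i J) T) h = avg (T i) (\<lambda>t. avg (PiE J T) (\<lambda>e. h (e(i:=t))))"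
proof -
  have s: "(\<Sum>p\<in>PiE (insert i J) T. h p) = (\<Sum>(t,e)\<in>T i \<times> PiE J T. h (e(i:=t)))"
    unfolding PiE_insert_eq using sum.reindex[OF inj_combinator[OF assms(1)], of h] by (simp add: case_prod_unfold comp_def)
  have c: "card (PiE (insert i J) T) = card (T i) * card (PiE J T)"
    using assms by (simp add: card_PiE)
  show ?thesis unfolding avg_def s c sum.cartesian_product[symmetric]
    by (simp add: sum_divide_distrib[symmetric])
qed

lemma sg_finite: "finite S \<Longrightarrow> finite (sg S)"
  by (simp add: finite_PiE)

lemma avg_pm: "avg {-1, 1::real} f = (f (-1) + f 1) / 2"
  by (simp add: avg_def)

lemma avg_const: "finite P \<Longrightarrow> P \<noteq> {} \<Longrightarrow> avg P (\<lambda>_. c) = c"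
  by (simp add: avg_def)

lemma avg_mono: "(\<And>p. p \<in> P \<Longrightarrow> f p \<le> g p) \<Longrightarrow> avg P f \<le> avg P g"
  unfolding avg_def by (intro divide_right_mono sum_mono) auto

lemma avg_add: "avg P (\<lambda>p. f p + g p) = avg P f + avg P g"
  unfolding avg_def by (simp add: sum.distrib add_divide_distrib)

lemma avg_cmult: "avg P (\<lambda>p. c * f p) = c * avg P f"
  unfolding avg_def by (simp add: sum_distrib_left)

lemma avg_swap: "avg P (\<lambda>p. avg Q (\<lambda>q. f p q)) = avg Q (\<lambda>q. avg P (\<lambda>p. f p q))"
  unfolding avg_def by (simp add: sum_divide_distrib[symmetric] sum.swap[of _ P Q])

lemma avg_cong: "(\<And>p. p \<in> P \<Longrightarrow> f p = g p) \<Longrightarrow> avg P f = avg P g"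
  unfolding avg_def by simp

lemma sg_nonempty: "sg S \<noteq> {}"
  by (simp add: PiE_eq_empty_iff)



lemma sum_upd_insert:
  assumes "i \<notin> J" "finite J"
  shows "(\<Sum>m\<in>insert i J. (e(i:=t)) m * v m) = t * v i + (\<Sum>m\<in>J. e m * v m)"
proof -
  have "(\<Sum>m\<in>J. (e(i:=t)) m * v m) = (\<Sum>m\<in>J. e m * v m)"
    using assms by (intro sum.cong) auto
  thus ?thesis using assms by simp
qed

lemma avg_pm_inner:
  "avg {-1,1::real} (\<lambda>t. avg P (\<lambda>e. F t e)) = avg P (\<lambda>e. (F (-1) e + F 1 e) / 2)"
  unfolding avg_pm avg_def by (simp add: sum.distrib add_divide_distrib sum_divide_distrib[symmetric])

lemma sum_if_notin[simp]:
  "i \<notin> J \<Longrightarrow> (\<Sum>m\<in>J. (if m = i then t else e m) * v m) = (\<Sum>m\<in>J. e m * v m)"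
  by (intro sum.cong) auto

lemma mom2:
  assumes "finite M"
  shows "avg (sg M) (\<lambda>\<theta>. (\<Sum>m\<in>M. \<theta> m * v m)\<^sup>2) = (\<Sum>m\<in>M. (v m)\<^sup>2)"
  using assms
proof (induction M rule: finite_induct)
  case empty
  then show ?case by (simp add: avg_def)
next
  case (insert i J)
  let ?X = "\<lambda>e. \<Sum>m\<in>J. e m * v m"
  have "avg (sg (insert i J)) (\<lambda>\<theta>. (\<Sum>m\<in>insert i J. \<theta> m * v m)\<^sup>2)
     = avg {-1,1} (\<lambda>t. avg (sg J) (\<lambda>e. (t * v i + ?X e)\<^sup>2))"
    using insert by (simp add: avg_split)
  also have "\<dots> = avg (sg J) (\<lambda>e. (?X e)\<^sup>2 + (v i)\<^sup>2)"
    unfolding avg_pm_inner by (intro avg_cong) (simp add: power2_eq_square algebra_simps)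
  also have "\<dots> = (\<Sum>m\<in>insert i J. (v m)\<^sup>2)"
    using insert by (simp add: avg_add avg_const sg_finite sg_nonempty)
  finally show ?case .
qed

lemma mom4:
  assumes "finite M"
  shows "avg (sg M) (\<lambda>\<theta>. (\<Sum>m\<in>M. \<theta> m * v m)^4) \<le> 3 * (\<Sum>m\<in>M. (v m)\<^sup>2)\<^sup>2"
  using assms
proof (induction M rule: finite_induct)
  case empty
  then show ?case by (simp add: avg_def)
next
  case (insert i J)
  let ?X = "\<lambda>e. \<Sum>m\<in>J. e m * v m"
  let ?s = "\<Sum>m\<in>J. (v m)\<^sup>2"
  have "avg (sg (insert i J)) (\<lambda>\<theta>. (\<Sum>m\<in>insert i J. \<theta> m * v m)^4)
     = avg {-1,1} (\<lambda>t. avg (sg J) (\<lambda>e. (t * v i + ?X e)^4))"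
    using insert by (simp add: avg_split)
  also have "\<dots> = avg (sg J) (\<lambda>e. (?X e)^4 + 6 * (v i)\<^sup>2 * (?X e)\<^sup>2 + (v i)^4)"
    unfolding avg_pm_inner by (intro avg_cong) (simp add: power2_eq_square power4_eq_xxxx algebra_simps)
  also have "\<dots> = avg (sg J) (\<lambda>e. (?X e)^4) + 6 * (v i)\<^sup>2 * ?s + (v i)^4"
    using insert by (simp add: avg_add avg_cmult avg_const sg_finite sg_nonempty mom2)
  also have "\<dots> \<le> 3 * ?s\<^sup>2 + 6 * (v i)\<^sup>2 * ?s + (v i)^4"
    using insert by simp
  also have "\<dots> \<le> 3 * ((v i)\<^sup>2 + ?s)\<^sup>2"
  proof -
    have "0 \<le> (v i)^4" by simp
    thus ?thesis by (simp add: power2_eq_square power4_eq_xxxx algebra_simps)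
  qed
  finally show ?case using insert by simp
qed



lemma quartic_pt:
  fixes x s :: real assumes "s > 0"
  shows "x\<^sup>2 \<le> (4/3) * s * \<bar>x\<bar> + x^4 / (12 * s\<^sup>2)"
proof -
  define t where "t = \<bar>x\<bar>"
  have t0: "t \<ge> 0" unfolding t_def by simp
  have "0 \<le> t * ((t - 2 * s) * (t - 2 * s)) * (t + 4 * s)"
    by (rule mult_nonneg_nonneg[OF mult_nonneg_nonneg[OF t0 zero_le_square]]) (use assms t0 in simp)
  also have "\<dots> = 16 * s^3 * t + t^4 - 12 * s\<^sup>2 * t\<^sup>2"
    by (simp add: power2_eq_square power3_eq_cube power4_eq_xxxx algebra_simps)
  finally have h: "0 \<le> (16 * s^3 * t + t^4 - 12 * s\<^sup>2 * t\<^sup>2) / (12 * s\<^sup>2)"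
    using assms by simp
  have e: "(4/3) * s * t + t^4 / (12 * s\<^sup>2) - t\<^sup>2 = (16 * s^3 * t + t^4 - 12 * s\<^sup>2 * t\<^sup>2) / (12 * s\<^sup>2)"
    using assms by (simp add: field_simps power2_eq_square power3_eq_cube)
  have x2: "x\<^sup>2 = t\<^sup>2" by (simp add: t_def)
  have x4: "x^4 = t^4" by (simp add: t_def power_even_abs)
  show ?thesis unfolding x2 x4 t_def[symmetric] using h e by linarith
qed

lemma khintchine:
  assumes "finite M"
  shows "sqrt (\<Sum>m\<in>M. (v m)\<^sup>2) \<le> 2 * avg (sg M) (\<lambda>\<theta>. \<bar>\<Sum>m\<in>M. \<theta> m * v m\<bar>)"
proof -
  define s where "s = sqrt (\<Sum>m\<in>M. (v m)\<^sup>2)"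
  let ?X = "\<lambda>\<theta>. \<Sum>m\<in>M. \<theta> m * v m"
  let ?E = "avg (sg M) (\<lambda>\<theta>. \<bar>?X \<theta>\<bar>)"
  have E0: "0 \<le> ?E"
    using avg_mono[of "sg M" "\<lambda>_. 0" "\<lambda>\<theta>. \<bar>?X \<theta>\<bar>"] avg_const[of "sg M" 0] assms
    by (simp add: sg_finite sg_nonempty)
  have ss: "s\<^sup>2 = (\<Sum>m\<in>M. (v m)\<^sup>2)" unfolding s_def by (simp add: sum_nonneg)
  show ?thesis
  proof (cases "s = 0")
    case True thus ?thesis using E0 unfolding s_def by simp
  next
    case False
    have "s \<ge> 0" unfolding s_def by (simp add: sum_nonneg)
    hence sp: "s > 0" using False by simp
    have "s\<^sup>2 = avg (sg M) (\<lambda>\<theta>. (?X \<theta>)\<^sup>2)" using mom2[OF assms] ss by simp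
    also have "\<dots> \<le> avg (sg M) (\<lambda>\<theta>. (4/3) * s * \<bar>?X \<theta>\<bar> + (1 / (12 * s\<^sup>2)) * (?X \<theta>)^4)"
      by (intro avg_mono) (use quartic_pt[OF sp] in simp)
    also have "\<dots> = (4/3) * s * ?E + (1 / (12 * s\<^sup>2)) * avg (sg M) (\<lambda>\<theta>. (?X \<theta>)^4)"
      by (simp only: avg_add avg_cmult)
    also have "\<dots> \<le> (4/3) * s * ?E + (1 / (12 * s\<^sup>2)) * (3 * (s\<^sup>2)\<^sup>2)"
      using mom4[OF assms, of v] ss sp by (intro add_left_mono mult_left_mono) (simp_all add: sum_nonneg)
    also have "\<dots> = (4/3) * s * ?E + s\<^sup>2 / 4" using sp by (simp add: power2_eq_square)
    finally have "(3/4) * s * s \<le> (4/3) * s * ?E" by (simp add: power2_eq_square)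
    hence "(3/4) * s \<le> (4/3) * ?E" using sp by (simp add: mult.commute mult.left_commute)
    thus ?thesis unfolding s_def[symmetric] using E0 by linarith
  qed
qed



definition bnd :: "'x set \<Rightarrow> ('x \<Rightarrow> real) \<Rightarrow> bool" where
  "bnd X h \<longleftrightarrow> (\<exists>B. \<forall>x\<in>X. \<bar>h x\<bar> \<le> B)"

lemma bnd_add: "bnd X f \<Longrightarrow> bnd X g \<Longrightarrow> bnd X (\<lambda>x. f x + g x)"
  unfolding bnd_def by (metis (no_types, opaque_lifting) abs_triangle_ineq add_mono order_trans)

lemma bnd_diff: "bnd X f \<Longrightarrow> bnd X g \<Longrightarrow> bnd X (\<lambda>x. f x - g x)"
  unfolding bnd_def by (metis (no_types, opaque_lifting) abs_triangle_ineq4 add_mono order_trans)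

lemma bnd_cmult: "bnd X f \<Longrightarrow> bnd X (\<lambda>x. c * f x)"
proof -
  assume "bnd X f"
  then obtain B where B: "\<forall>x\<in>X. \<bar>f x\<bar> \<le> B" unfolding bnd_def by blast
  have "\<forall>x\<in>X. \<bar>c * f x\<bar> \<le> \<bar>c\<bar> * B"
    using B by (simp add: abs_mult mult_left_mono)
  thus ?thesis unfolding bnd_def by blast
qed

lemma bnd_sum: "finite S \<Longrightarrow> (\<And>s. s \<in> S \<Longrightarrow> bnd X (h s)) \<Longrightarrow> bnd X (\<lambda>x. \<Sum>s\<in>S. h s x)"
proof (induction S rule: finite_induct)
  case empty thus ?case unfolding bnd_def by (intro exI[of _ 0]) simp
next
  case (insert a S) thus ?case by (simp add: bnd_add)
qed

lemma bnd_bdd: "bnd X f \<Longrightarrow> bdd_above (f ` X)"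
  unfolding bnd_def bdd_above_def by (metis abs_le_D1 imageE)

lemma sum_upd1:
  assumes "i \<notin> J" "finite J"
  shows "(\<Sum>s\<in>insert i J. (e(i:=t)) s * f s x) = t * f i x + (\<Sum>s\<in>J. e s * f s x)"
proof -
  have "(\<Sum>s\<in>J. (e(i:=t)) s * f s x) = (\<Sum>s\<in>J. e s * f s x)"
    using assms by (intro sum.cong) auto
  thus ?thesis unfolding sum.insert[OF assms(2,1)] by simp
qed

lemma sum_upd2:
  assumes "i \<notin> J" "finite J"
  shows "(\<Sum>j\<in>insert i J. \<Sum>m\<in>M. (e(i:=t)) j m * g j x m) = (\<Sum>m\<in>M. t m * g i x m) + (\<Sum>j\<in>J. \<Sum>m\<in>M. e j m * g j x m)"
proof -
  have "(\<Sum>j\<in>J. \<Sum>m\<in>M. (e(i:=t)) j m * g j x m) = (\<Sum>j\<in>J. \<Sum>m\<in>M. e j m * g j x m)"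
    using assms by (intro sum.cong) auto
  thus ?thesis unfolding sum.insert[OF assms(2,1)] by simp
qed

definition negs :: "'a set \<Rightarrow> ('a \<Rightarrow> real) \<Rightarrow> ('a \<Rightarrow> real)" where
  "negs M \<theta> = restrict (\<lambda>m. - \<theta> m) M"

lemma negs_in: "\<theta> \<in> sg M \<Longrightarrow> negs M \<theta> \<in> sg M"
  unfolding negs_def by (auto simp: PiE_iff)

lemma negs_negs: "\<theta> \<in> sg M \<Longrightarrow> negs M (negs M \<theta>) = \<theta>"
  unfolding negs_def by (auto simp: PiE_iff extensional_def restrict_def)

lemma avg_negs: "avg (sg M) (\<lambda>\<theta>. h (negs M \<theta>)) = avg (sg M) h"
  unfolding avg_def
  by (rule arg_cong[where f = "\<lambda>z. z / _"], rule sum.reindex_bij_witness[where i = "negs M" and j = "negs M"])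
     (auto simp: negs_in negs_negs)

lemma sum_negs: "(\<Sum>m\<in>M. negs M \<theta> m * c m) = - (\<Sum>m\<in>M. \<theta> m * c m)"
  unfolding negs_def by (simp add: sum_negf[symmetric])

lemma step:
  assumes M: "finite M" and X: "X \<noteq> {}" and bR: "bnd X R" and bf: "bnd X f"
    and bg: "\<And>m. m \<in> M \<Longrightarrow> bnd X (\<lambda>x. g x m)"
    and lip: "\<And>x y. x \<in> X \<Longrightarrow> y \<in> X \<Longrightarrow> \<bar>f x - f y\<bar> \<le> L2_set (\<lambda>m. g x m - g y m) M"
  shows "(Sup ((\<lambda>x. R x + f x) ` X) + Sup ((\<lambda>x. R x - f x) ` X)) / 2
         \<le> avg (sg M) (\<lambda>\<theta>. Sup ((\<lambda>x. R x + 2 * (\<Sum>m\<in>M. \<theta> m * g x m)) ` X))"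
proof -
  define G where "G = (\<lambda>\<theta> x. \<Sum>m\<in>M. \<theta> m * g x m)"
  define U where "U = (\<lambda>\<theta>. Sup ((\<lambda>x. R x + 2 * G \<theta> x) ` X))"
  have bG: "bnd X (G \<theta>)" for \<theta>
    unfolding G_def by (intro bnd_sum M bnd_cmult bg)
  have bU: "bdd_above ((\<lambda>x. R x + 2 * G \<theta> x) ` X)" for \<theta>
    by (intro bnd_bdd bnd_add bR bnd_cmult bG)
  have bV: "bdd_above ((\<lambda>x. R x - 2 * G \<theta> x) ` X)" for \<theta>
    by (intro bnd_bdd bnd_diff bR bnd_cmult bG)
  have UV: "U (negs M \<theta>) = Sup ((\<lambda>x. R x - 2 * G \<theta> x) ` X)" for \<theta>
    unfolding U_def G_def sum_negs by simp
  have key: "R x + f x + (R y - f y) \<le> 2 * avg (sg M) U" if x: "x \<in> X" and y: "y \<in> X" for x y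
  proof -
    have "R x + f x + (R y - f y) \<le> R x + R y + L2_set (\<lambda>m. g x m - g y m) M"
      using lip[OF x y] by linarith
    also have "\<dots> \<le> R x + R y + 2 * avg (sg M) (\<lambda>\<theta>. \<bar>\<Sum>m\<in>M. \<theta> m * (g x m - g y m)\<bar>)"
      using khintchine[OF M, of "\<lambda>m. g x m - g y m"] unfolding L2_set_def by linarith
    also have "\<dots> = avg (sg M) (\<lambda>\<theta>. R x + R y + 2 * \<bar>G \<theta> x - G \<theta> y\<bar>)"
      unfolding G_def by (simp add: avg_add avg_cmult avg_const M sg_finite sg_nonempty
          algebra_simps sum_subtractf)
    also have "\<dots> \<le> avg (sg M) (\<lambda>\<theta>. U \<theta> + U (negs M \<theta>))"
    proof (intro avg_mono)
      fix \<theta>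
      have u1: "R x + 2 * G \<theta> x \<le> U \<theta>" "R y + 2 * G \<theta> y \<le> U \<theta>"
        unfolding U_def using x y bU by (auto intro: cSUP_upper)
      have u2: "R x - 2 * G \<theta> x \<le> U (negs M \<theta>)" "R y - 2 * G \<theta> y \<le> U (negs M \<theta>)"
        unfolding UV using x y bV by (auto intro: cSUP_upper)
      show "R x + R y + 2 * \<bar>G \<theta> x - G \<theta> y\<bar> \<le> U \<theta> + U (negs M \<theta>)"
        using u1 u2 by (cases "G \<theta> x \<ge> G \<theta> y") (simp_all add: abs_if)
    qed
    also have "\<dots> = 2 * avg (sg M) U"
      by (simp add: avg_add avg_negs[of M U])
    finally show ?thesis .
  qed
  have "Sup ((\<lambda>x. R x + f x) ` X) \<le> 2 * avg (sg M) U - (R y - f y)" if y: "y \<in> X" for y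
    using key[OF _ y] X by (intro cSUP_least) (auto simp: algebra_simps)
  hence "Sup ((\<lambda>y. R y - f y) ` X) \<le> 2 * avg (sg M) U - Sup ((\<lambda>x. R x + f x) ` X)"
    using X by (intro cSUP_least) (auto simp: algebra_simps)
  thus ?thesis unfolding U_def G_def by simp
qed



lemma contraction:
  fixes f :: "'i \<Rightarrow> 'x \<Rightarrow> real" and g :: "'i \<Rightarrow> 'x \<Rightarrow> 'm \<Rightarrow> real" and R :: "'x \<Rightarrow> real"
  assumes "finite I" "finite M" "X \<noteq> {}"
    "\<And>i. i \<in> I \<Longrightarrow> bnd X (f i)" "\<And>i m. i \<in> I \<Longrightarrow> m \<in> M \<Longrightarrow> bnd X (\<lambda>x. g i x m)"
    "\<And>i x y. i \<in> I \<Longrightarrow> x \<in> X \<Longrightarrow> y \<in> X \<Longrightarrow> \<bar>f i x - f i y\<bar> \<le> L2_set (\<lambda>m. g i x m - g i y m) M"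
    "bnd X R"
  shows "avg (sg I) (\<lambda>\<epsilon>. Sup ((\<lambda>x. R x + (\<Sum>i\<in>I. \<epsilon> i * f i x)) ` X))
     \<le> avg (PiE I (\<lambda>_. sg M)) (\<lambda>\<eta>. Sup ((\<lambda>x. R x + 2 * (\<Sum>i\<in>I. \<Sum>m\<in>M. \<eta> i m * g i x m)) ` X))"
  using assms
proof (induction I arbitrary: R rule: finite_induct)
  case empty
  then show ?case by (simp add: avg_def)
next
  case (insert i J)
  note M = insert.prems(1) and X = insert.prems(2)
  have IH: "avg (sg J) (\<lambda>\<epsilon>. Sup ((\<lambda>x. R' x + (\<Sum>i\<in>J. \<epsilon> i * f i x)) ` X))
     \<le> avg (PiE J (\<lambda>_. sg M)) (\<lambda>\<eta>. Sup ((\<lambda>x. R' x + 2 * (\<Sum>i\<in>J. \<Sum>m\<in>M. \<eta> i m * g i x m)) ` X))"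
    if "bnd X R'" for R'
    by (rule insert.IH) (use insert.prems that in auto)
  define S where "S = (\<lambda>e x. \<Sum>s\<in>J. e s * f s x)"
  define G where "G = (\<lambda>\<theta> x. \<Sum>m\<in>M. \<theta> m * g i x m)"
  have bS: "bnd X (S e)" for e
    unfolding S_def by (intro bnd_sum insert bnd_cmult insert.prems) auto
  have bG: "bnd X (G \<theta>)" for \<theta>
    unfolding G_def by (intro bnd_sum M bnd_cmult insert.prems) auto
  have sp1: "avg (sg (insert i J)) h = avg {-1,1} (\<lambda>t. avg (sg J) (\<lambda>e. h (e(i:=t))))" for h
    by (rule avg_split) (use insert in auto)
  have sp2: "avg (PiE (insert i J) (\<lambda>_. sg M)) h = avg (sg M) (\<lambda>t. avg (PiE J (\<lambda>_. sg M)) (\<lambda>e. h (e(i:=t))))" for h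
    by (rule avg_split) (use insert in \<open>auto simp: sg_finite\<close>)
  have "avg (sg (insert i J)) (\<lambda>\<epsilon>. Sup ((\<lambda>x. R x + (\<Sum>s\<in>insert i J. \<epsilon> s * f s x)) ` X))
      = avg (sg J) (\<lambda>e. (Sup ((\<lambda>x. (R x + S e x) + f i x) ` X) + Sup ((\<lambda>x. (R x + S e x) - f i x) ` X)) / 2)"
    unfolding sp1 avg_pm_inner
  proof (intro avg_cong)
    fix e
    show "(Sup ((\<lambda>x. R x + (\<Sum>s\<in>insert i J. (e(i := - 1)) s * f s x)) ` X) +
          Sup ((\<lambda>x. R x + (\<Sum>s\<in>insert i J. (e(i := 1)) s * f s x)) ` X)) / 2 =
         (Sup ((\<lambda>x. R x + S e x + f i x) ` X) + Sup ((\<lambda>x. R x + S e x - f i x) ` X)) / 2"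
      unfolding sum_upd1[OF insert(2,1)] S_def by (simp add: algebra_simps)
  qed
  also have "\<dots> \<le> avg (sg J) (\<lambda>e. avg (sg M) (\<lambda>\<theta>. Sup ((\<lambda>x. (R x + S e x) + 2 * G \<theta> x) ` X)))"
    unfolding G_def
    by (intro avg_mono step M X bnd_add insert.prems bS) (use insert.prems in auto)
  also have "\<dots> = avg (sg M) (\<lambda>\<theta>. avg (sg J) (\<lambda>e. Sup ((\<lambda>x. (R x + 2 * G \<theta> x) + S e x) ` X)))"
    by (subst avg_swap) (simp add: add_ac)
  also have "\<dots> \<le> avg (sg M) (\<lambda>\<theta>. avg (PiE J (\<lambda>_. sg M)) (\<lambda>\<eta>. Sup ((\<lambda>x. (R x + 2 * G \<theta> x) + 2 * (\<Sum>j\<in>J. \<Sum>m\<in>M. \<eta> j m * g j x m)) ` X)))"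
    unfolding S_def by (intro avg_mono IH bnd_add insert.prems bnd_cmult bG)
  also have "\<dots> = avg (PiE (insert i J) (\<lambda>_. sg M)) (\<lambda>\<eta>. Sup ((\<lambda>x. R x + 2 * (\<Sum>j\<in>insert i J. \<Sum>m\<in>M. \<eta> j m * g j x m)) ` X))"
    unfolding sp2 sum_upd2[OF insert(2,1)] G_def by (simp add: algebra_simps)
  finally show ?case .
qed



lemma cosh_bound: fixes x :: real shows "(exp (- x) + exp x) / 2 \<le> exp (x\<^sup>2 / 2)"
proof -
  define a where "a = \<bar>x\<bar>"
  have a0: "a \<ge> 0" unfolding a_def by simp
  have "- (2 * a) * (1/2) + ln (1 + (1/2) * (exp (2 * a) - 1)) \<le> (2 * a)\<^sup>2 / 8"
    using Hoeffdings_lemma_aux[of "2 * a" "1/2"] a0 by simp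
  hence "ln ((1 + exp (2 * a)) / 2) \<le> x\<^sup>2 / 2 + a"
    unfolding a_def by (simp add: power2_eq_square field_simps)
  moreover have "(1 + exp (2 * a)) / 2 > 0" by (simp add: add_pos_pos)
  ultimately have "(1 + exp (2 * a)) / 2 \<le> exp (x\<^sup>2 / 2 + a)"
    by (metis exp_le_cancel_iff exp_ln)
  hence "(1 + exp (2 * a)) / 2 * exp (- a) \<le> exp (x\<^sup>2 / 2 + a) * exp (- a)"
    by (rule mult_right_mono) simp
  hence "(exp (- a) + exp a) / 2 \<le> exp (x\<^sup>2 / 2)"
    by (simp add: field_simps exp_add[symmetric] mult_exp_exp)
  moreover have "exp (- a) + exp a = exp (- x) + exp x"
    unfolding a_def by (cases "x \<ge> 0") auto
  ultimately show ?thesis by simp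
qed

lemma avg_nonneg: "(\<And>p. p \<in> P \<Longrightarrow> 0 \<le> f p) \<Longrightarrow> 0 \<le> avg P f"
  unfolding avg_def by (intro divide_nonneg_nonneg sum_nonneg) auto

lemma avg_multc: "avg P (\<lambda>p. f p * c) = avg P f * c"
  unfolding avg_def by (simp add: sum_distrib_right)

lemma mgf1:
  assumes "finite S"
  shows "avg (sg S) (\<lambda>\<theta>. exp (\<Sum>s\<in>S. \<theta> s * c s)) \<le> exp ((\<Sum>s\<in>S. (c s)\<^sup>2) / 2)"
  using assms
proof (induction S rule: finite_induct)
  case empty thus ?case by (simp add: avg_def)
next
  case (insert i J)
  have sp1: "avg (sg (insert i J)) h = avg {-1,1} (\<lambda>t. avg (sg J) (\<lambda>e. h (e(i:=t))))" for h
    by (rule avg_split) (use insert in auto)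
  have "avg (sg (insert i J)) (\<lambda>\<theta>. exp (\<Sum>s\<in>insert i J. \<theta> s * c s))
      = avg (sg J) (\<lambda>e. ((exp (- c i) + exp (c i)) / 2) * exp (\<Sum>s\<in>J. e s * c s))"
    unfolding sp1 avg_pm_inner
    by (intro avg_cong) (simp only: sum_upd_insert[OF insert(2,1)], simp add: mult_exp_exp algebra_simps)
  also have "\<dots> = ((exp (- c i) + exp (c i)) / 2) * avg (sg J) (\<lambda>e. exp (\<Sum>s\<in>J. e s * c s))"
    by (rule avg_cmult)
  also have "\<dots> \<le> exp ((c i)\<^sup>2 / 2) * exp ((\<Sum>s\<in>J. (c s)\<^sup>2) / 2)"
    by (intro mult_mono cosh_bound insert.IH avg_nonneg) (auto intro: add_nonneg_nonneg)
  also have "\<dots> = exp ((\<Sum>s\<in>insert i J. (c s)\<^sup>2) / 2)"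
    using insert by (simp add: exp_add[symmetric] add_divide_distrib)
  finally show ?case .
qed

lemma mgf2:
  assumes "finite I" "finite M"
  shows "avg (PiE I (\<lambda>_. sg M)) (\<lambda>\<eta>. exp (\<Sum>i\<in>I. \<Sum>m\<in>M. \<eta> i m * c i m))
     \<le> exp ((\<Sum>i\<in>I. \<Sum>m\<in>M. (c i m)\<^sup>2) / 2)"
  using assms
proof (induction I rule: finite_induct)
  case empty thus ?case by (simp add: avg_def)
next
  case (insert i J)
  have sp2: "avg (PiE (insert i J) (\<lambda>_. sg M)) h = avg (sg M) (\<lambda>t. avg (PiE J (\<lambda>_. sg M)) (\<lambda>e. h (e(i:=t))))" for h
    by (rule avg_split) (use insert in \<open>auto simp: sg_finite\<close>)
  have "avg (PiE (insert i J) (\<lambda>_. sg M)) (\<lambda>\<eta>. exp (\<Sum>j\<in>insert i J. \<Sum>m\<in>M. \<eta> j m * c j m))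
     = avg (sg M) (\<lambda>t. avg (PiE J (\<lambda>_. sg M)) (\<lambda>e. exp (\<Sum>m\<in>M. t m * c i m) * exp (\<Sum>j\<in>J. \<Sum>m\<in>M. e j m * c j m)))"
    unfolding sp2 using sum_upd2[OF insert(2,1), where g = "\<lambda>j x m. c j m"]
    by (simp add: exp_add)
  also have "\<dots> = avg (sg M) (\<lambda>t. exp (\<Sum>m\<in>M. t m * c i m)) * avg (PiE J (\<lambda>_. sg M)) (\<lambda>e. exp (\<Sum>j\<in>J. \<Sum>m\<in>M. e j m * c j m))"
    by (simp only: avg_cmult avg_multc)
  also have "\<dots> \<le> exp ((\<Sum>m\<in>M. (c i m)\<^sup>2) / 2) * exp ((\<Sum>j\<in>J. \<Sum>m\<in>M. (c j m)\<^sup>2) / 2)"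
    by (intro mult_mono mgf1 insert.IH insert.prems avg_nonneg) auto
  also have "\<dots> = exp ((\<Sum>j\<in>insert i J. \<Sum>m\<in>M. (c j m)\<^sup>2) / 2)"
    using insert by (simp add: exp_add[symmetric] add_divide_distrib)
  finally show ?case .
qed

lemma pow_fact_le_exp:
  fixes y :: real assumes "0 \<le> y"
  shows "y ^ n / fact n \<le> exp y"
proof -
  have "y ^ n / fact n \<le> (\<Sum>k\<le>n. y ^ k / fact k)"
    by (rule member_le_sum) (use assms in auto)
  also have "\<dots> \<le> exp y"
    using assms summable_exp_generic[of y]
    by (auto simp: exp_def divide_inverse ac_simps intro!: sum_le_suminf)
  finally show ?thesis .
qed



lemma avg_sum: "avg P (\<lambda>p. \<Sum>l\<in>L. F l p) = (\<Sum>l\<in>L. avg P (F l))"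
  unfolding avg_def by (simp add: sum.swap[of _ P L] sum_divide_distrib)

lemma avg_divc: "avg P (\<lambda>p. f p / c) = avg P f / c"
  unfolding avg_def by (simp add: sum_divide_distrib mult.commute)

lemma pow_aux: "(A::real) ^ q / B ^ q * (2 * C ^ q) = 2 * (A / B * C) ^ q"
  by (simp add: power_divide power_mult_distrib)

lemma mom_scalar:
  assumes I: "finite I" and M: "finite M" and q: "q \<ge> 1"
  shows "avg (PiE I (\<lambda>_. sg M)) (\<lambda>\<eta>. (\<Sum>i\<in>I. \<Sum>m\<in>M. \<eta> i m * c i m) ^ (2 * q))
    \<le> 2 * (2 * exp 1 * real q * (\<Sum>i\<in>I. \<Sum>m\<in>M. (c i m)\<^sup>2)) ^ q"
proof -
  define P where "P = PiE I (\<lambda>_. sg M)"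
  define Z where "Z = (\<lambda>\<eta>. \<Sum>i\<in>I. \<Sum>m\<in>M. \<eta> i m * c i m)"
  define s where "s = (\<Sum>i\<in>I. \<Sum>m\<in>M. (c i m)\<^sup>2)"
  have s0: "s \<ge> 0" unfolding s_def by (intro sum_nonneg) auto
  show ?thesis
  proof (cases "s = 0")
    case True
    have "\<forall>i\<in>I. (\<Sum>m\<in>M. (c i m)\<^sup>2) = 0"
      using True I unfolding s_def by (subst (asm) sum_nonneg_eq_0_iff) (auto intro: sum_nonneg)
    hence c0: "\<forall>i\<in>I. \<forall>m\<in>M. c i m = 0"
      using M by (auto simp: sum_nonneg_eq_0_iff)
    have "Z \<eta> = 0" for \<eta> unfolding Z_def using c0 by simp
    hence "avg P (\<lambda>\<eta>. (Z \<eta>) ^ (2 * q)) = 0" using q unfolding avg_def by simp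
    thus ?thesis unfolding P_def Z_def s_def[symmetric] using s0 by simp
  next
    case False
    hence sp: "s > 0" using s0 by simp
    define l where "l = sqrt (2 * real q / s)"
    have lp: "l > 0" unfolding l_def using sp q by simp
    have l2: "l\<^sup>2 = 2 * real q / s" unfolding l_def using sp by simp
    have pw: "Z \<eta> ^ (2 * q) \<le> fact (2 * q) / l ^ (2 * q) * (exp (l * Z \<eta>) + exp (- (l * Z \<eta>)))" for \<eta>
    proof -
      have "(l * \<bar>Z \<eta>\<bar>) ^ (2 * q) / fact (2 * q) \<le> exp (l * \<bar>Z \<eta>\<bar>)"
        using lp by (intro pow_fact_le_exp) simp
      also have "\<dots> \<le> exp (l * Z \<eta>) + exp (- (l * Z \<eta>))"
        by (cases "Z \<eta> \<ge> 0") (auto simp: add_pos_pos)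
      finally have "l ^ (2 * q) * Z \<eta> ^ (2 * q) \<le> fact (2 * q) * (exp (l * Z \<eta>) + exp (- (l * Z \<eta>)))"
        by (simp add: power_mult_distrib power_even_abs divide_le_eq mult.commute)
      thus ?thesis using lp by (simp add: field_simps)
    qed
    have e1: "(\<lambda>\<eta>. exp (l * Z \<eta>)) = (\<lambda>\<eta>. exp (\<Sum>i\<in>I. \<Sum>m\<in>M. \<eta> i m * (l * c i m)))"
      unfolding Z_def by (simp add: sum_distrib_left algebra_simps)
    have e2: "(\<lambda>\<eta>. exp (- (l * Z \<eta>))) = (\<lambda>\<eta>. exp (\<Sum>i\<in>I. \<Sum>m\<in>M. \<eta> i m * (- l * c i m)))"
      unfolding Z_def by (simp add: sum_distrib_left algebra_simps sum_negf)
    have sq: "(\<Sum>i\<in>I. \<Sum>m\<in>M. (k * c i m)\<^sup>2) = k\<^sup>2 * s" for k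
      unfolding s_def by (simp add: power_mult_distrib sum_distrib_left)
    have "avg P (\<lambda>\<eta>. Z \<eta> ^ (2 * q)) \<le> avg P (\<lambda>\<eta>. fact (2 * q) / l ^ (2 * q) * (exp (l * Z \<eta>) + exp (- (l * Z \<eta>))))"
      by (intro avg_mono pw)
    also have "\<dots> = fact (2 * q) / l ^ (2 * q) * (avg P (\<lambda>\<eta>. exp (l * Z \<eta>)) + avg P (\<lambda>\<eta>. exp (- (l * Z \<eta>))))"
      by (simp only: avg_cmult avg_add)
    also have "\<dots> \<le> fact (2 * q) / l ^ (2 * q) * (exp (l\<^sup>2 * s / 2) + exp (l\<^sup>2 * s / 2))"
      unfolding e1 e2 P_def
      using mgf2[OF I M, of "\<lambda>i m. l * c i m"] mgf2[OF I M, of "\<lambda>i m. - l * c i m"] sq[of l] sq[of "-l"]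
      by (intro mult_left_mono add_mono) auto
    also have "\<dots> = fact (2 * q) / (2 * real q / s) ^ q * (2 * exp 1 ^ q)"
      using sp by (simp add: power_mult l2 exp_of_nat_mult[symmetric])
    also have "\<dots> \<le> ((2 * real q)\<^sup>2) ^ q / (2 * real q / s) ^ q * (2 * exp 1 ^ q)"
    proof -
      have "fact (2 * q) \<le> (real (2 * q) ^ (2 * q) :: real)"
        using fact_le_power[of "2 * q", where 'a = real] by simp
      hence "fact (2 * q) \<le> ((2 * real q)\<^sup>2) ^ q" by (simp add: power_mult)
      thus ?thesis using sp q by (intro mult_right_mono divide_right_mono) auto
    qed
    also have "\<dots> = 2 * ((2 * real q)\<^sup>2 / (2 * real q / s) * exp 1) ^ q"
      by (rule pow_aux)
    also have "(2 * real q)\<^sup>2 / (2 * real q / s) * exp 1 = 2 * exp 1 * real q * s"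
      using sp q by (simp add: field_simps power2_eq_square)
    finally show ?thesis unfolding P_def Z_def s_def .
  qed
qed



lemma convex_pow: "convex_on {0::real..} (\<lambda>x. x ^ q)"
proof (cases "even q")
  case True thus ?thesis using convex_power_even[of q] convex_on_subset by blast
next
  case False thus ?thesis using convex_power_odd[of q] by simp
qed

lemma mom_vec:
  fixes D :: nat
  assumes I: "finite I" and M: "finite M" and q: "q \<ge> 1"
  shows "avg (PiE I (\<lambda>_. sg M)) (\<lambda>\<eta>. (\<Sum>l<D. (\<Sum>i\<in>I. \<Sum>m\<in>M. \<eta> i m * c l i m)\<^sup>2) ^ q)
    \<le> 2 * (2 * exp 1 * real q * (\<Sum>l<D. \<Sum>i\<in>I. \<Sum>m\<in>M. (c l i m)\<^sup>2)) ^ q"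
proof -
  define P where "P = PiE I (\<lambda>_. sg M)"
  define Z where "Z = (\<lambda>l \<eta>. \<Sum>i\<in>I. \<Sum>m\<in>M. \<eta> i m * c l i m)"
  define \<sigma> where "\<sigma> = (\<lambda>l. \<Sum>i\<in>I. \<Sum>m\<in>M. (c l i m)\<^sup>2)"
  define s where "s = (\<Sum>l<D. \<sigma> l)"
  have \<sigma>0: "\<sigma> l \<ge> 0" for l unfolding \<sigma>_def by (intro sum_nonneg) auto
  have s0: "s \<ge> 0" unfolding s_def using \<sigma>0 by (simp add: sum_nonneg)
  have Z0: "Z l \<eta> = 0" if "\<sigma> l = 0" for l \<eta>
  proof -
    have "\<forall>i\<in>I. (\<Sum>m\<in>M. (c l i m)\<^sup>2) = 0"
      using that I unfolding \<sigma>_def by (subst (asm) sum_nonneg_eq_0_iff) (auto intro: sum_nonneg)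
    hence "\<forall>i\<in>I. \<forall>m\<in>M. c l i m = 0"
      using M by (auto simp: sum_nonneg_eq_0_iff)
    thus ?thesis unfolding Z_def by simp
  qed
  have PP: "finite P" "P \<noteq> {}" unfolding P_def using I M
    by (auto simp: finite_PiE sg_finite PiE_eq_empty_iff sg_nonempty)
  show ?thesis
  proof (cases "s = 0")
    case True
    hence "\<forall>l\<in>{..<D}. \<sigma> l = 0" unfolding s_def using \<sigma>0 by (subst (asm) sum_nonneg_eq_0_iff) auto
    hence "(\<Sum>l<D. (Z l \<eta>)\<^sup>2) ^ q = 0" for \<eta> using Z0 q by simp
    hence "avg P (\<lambda>\<eta>. (\<Sum>l<D. (Z l \<eta>)\<^sup>2) ^ q) = 0" unfolding avg_def by simp
    thus ?thesis unfolding P_def Z_def \<sigma>_def[symmetric] s_def[symmetric] using s0 by simp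
  next
    case False
    hence sp: "s > 0" using s0 by simp
    define Pl where "Pl = {l\<in>{..<D}. \<sigma> l > 0}"
    define w where "w = (\<lambda>l. \<sigma> l / s)"
    have Plf: "finite Pl" unfolding Pl_def by simp
    have sPl: "s = (\<Sum>l\<in>Pl. \<sigma> l)"
      unfolding s_def Pl_def using \<sigma>0 by (intro sum.mono_neutral_right) (auto simp: less_le)
    have Pne: "Pl \<noteq> {}" using sPl sp by auto
    have wp: "w l > 0" if "l \<in> Pl" for l using that sp unfolding w_def Pl_def by simp
    have w1: "(\<Sum>l\<in>Pl. w l) = 1" unfolding w_def using sPl sp by (simp add: sum_divide_distrib[symmetric])
    have pw: "(\<Sum>l<D. (Z l \<eta>)\<^sup>2) ^ q \<le> (\<Sum>l\<in>Pl. w l * (Z l \<eta> ^ (2 * q) / w l ^ q))" for \<eta>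
    proof -
      have "(\<Sum>l<D. (Z l \<eta>)\<^sup>2) = (\<Sum>l\<in>Pl. (Z l \<eta>)\<^sup>2)"
        unfolding Pl_def using Z0 \<sigma>0 by (intro sum.mono_neutral_right) (auto simp: less_le)
      also have "\<dots> = (\<Sum>l\<in>Pl. w l *\<^sub>R ((Z l \<eta>)\<^sup>2 / w l))"
        using wp by (intro sum.cong) (auto simp: less_imp_neq[symmetric])
      finally have "(\<Sum>l<D. (Z l \<eta>)\<^sup>2) ^ q = (\<Sum>l\<in>Pl. w l *\<^sub>R ((Z l \<eta>)\<^sup>2 / w l)) ^ q" by simp
      also have "\<dots> \<le> (\<Sum>l\<in>Pl. w l * ((Z l \<eta>)\<^sup>2 / w l) ^ q)"
        by (rule convex_on_sum[OF Plf Pne convex_pow w1]) (use wp in \<open>auto intro: less_imp_le divide_nonneg_pos\<close>)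
      also have "\<dots> = (\<Sum>l\<in>Pl. w l * (Z l \<eta> ^ (2 * q) / w l ^ q))"
        by (simp add: power_divide power_mult)
      finally show ?thesis .
    qed
    have "avg P (\<lambda>\<eta>. (\<Sum>l<D. (Z l \<eta>)\<^sup>2) ^ q) \<le> avg P (\<lambda>\<eta>. \<Sum>l\<in>Pl. w l * (Z l \<eta> ^ (2 * q) / w l ^ q))"
      by (intro avg_mono pw)
    also have "\<dots> = (\<Sum>l\<in>Pl. w l * (avg P (\<lambda>\<eta>. Z l \<eta> ^ (2 * q)) / w l ^ q))"
      by (simp only: avg_sum avg_cmult avg_divc)
    also have "\<dots> \<le> (\<Sum>l\<in>Pl. w l * (2 * (2 * exp 1 * real q * \<sigma> l) ^ q / w l ^ q))"
      using wp unfolding P_def Z_def \<sigma>_def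
      by (intro sum_mono mult_left_mono divide_right_mono mom_scalar I M q) (auto intro: less_imp_le)
    also have "\<dots> = (\<Sum>l\<in>Pl. w l * (2 * (2 * exp 1 * real q * s) ^ q))"
    proof (intro sum.cong refl)
      fix l assume l: "l \<in> Pl"
      have "\<sigma> l = w l * s" unfolding w_def using sp by simp
      hence "(2 * exp 1 * real q * \<sigma> l) ^ q = w l ^ q * (2 * exp 1 * real q * s) ^ q"
        by (simp add: power_mult_distrib[symmetric] mult_ac)
      thus "w l * (2 * (2 * exp 1 * real q * \<sigma> l) ^ q / w l ^ q) = w l * (2 * (2 * exp 1 * real q * s) ^ q)"
        using wp[OF l] by simp
    qed
    also have "\<dots> = 2 * (2 * exp 1 * real q * s) ^ q"
      by (simp add: sum_distrib_right[symmetric] w1)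
    finally show ?thesis unfolding P_def Z_def s_def \<sigma>_def .
  qed
qed



lemma avg_jensen_pow:
  assumes "finite P" "P \<noteq> {}" "\<And>p. p \<in> P \<Longrightarrow> Y p \<ge> 0"
  shows "(avg P Y) ^ r \<le> avg P (\<lambda>p. Y p ^ r)"
proof -
  have "(\<Sum>p\<in>P. (1 / real (card P)) *\<^sub>R Y p) ^ r \<le> (\<Sum>p\<in>P. (1 / real (card P)) * Y p ^ r)"
    by (rule convex_on_sum[OF assms(1,2) convex_pow]) (use assms in auto)
  thus ?thesis unfolding avg_def by (simp add: sum_divide_distrib)
qed

lemma emax:
  fixes k D :: nat and y :: "nat \<Rightarrow> nat \<Rightarrow> 'i \<Rightarrow> 'm \<Rightarrow> real"
  assumes I: "finite I" and M: "finite M" and k: "k \<ge> 1"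
    and s2: "\<And>j. j < k \<Longrightarrow> (\<Sum>l<D. \<Sum>i\<in>I. \<Sum>m\<in>M. (y j l i m)\<^sup>2) \<le> s2"
  shows "avg (PiE I (\<lambda>_. sg M)) (\<lambda>\<eta>. Max ((\<lambda>j. sqrt (\<Sum>l<D. (\<Sum>i\<in>I. \<Sum>m\<in>M. \<eta> i m * y j l i m)\<^sup>2)) ` {..<k}))
     \<le> exp 1 * sqrt (6 * ln (2 * real k) * s2)"
proof -
  define P where "P = PiE I (\<lambda>_. sg M)"
  define N where "N = (\<lambda>j \<eta>. sqrt (\<Sum>l<D. (\<Sum>i\<in>I. \<Sum>m\<in>M. \<eta> i m * y j l i m)\<^sup>2))"
  define Y where "Y = (\<lambda>\<eta>. Max ((\<lambda>j. N j \<eta>) ` {..<k}))"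
  define q where "q = nat \<lceil>ln (2 * real k)\<rceil>"
  have lnk: "ln (2 * real k) \<ge> 2/3"
  proof -
    have "ln 2 \<le> ln (2 * real k)" using k by (subst ln_le_cancel_iff) auto
    thus ?thesis using ln2_ge_two_thirds by linarith
  qed
  have q1: "q \<ge> 1" unfolding q_def using lnk by linarith
  have qge: "real q \<ge> ln (2 * real k)" unfolding q_def by linarith
  have qle: "real q \<le> ln (2 * real k) + 1"
  proof -
    have cz: "\<lceil>ln (2 * real k)\<rceil> \<ge> 0" using lnk by simp
    hence "real q = of_int \<lceil>ln (2 * real k)\<rceil>" unfolding q_def by simp
    thus ?thesis using ceiling_correct[of "ln (2 * real k)"] by linarith
  qed
  have s20: "s2 \<ge> 0"
  proof -
    have "0 \<le> (\<Sum>l<D. \<Sum>i\<in>I. \<Sum>m\<in>M. (y 0 l i m)\<^sup>2)" by (intro sum_nonneg) auto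
    thus ?thesis using s2[of 0] k by linarith
  qed
  have PP: "finite P" "P \<noteq> {}" unfolding P_def using I M
    by (auto simp: finite_PiE sg_finite PiE_eq_empty_iff sg_nonempty)
  have k0: "0 \<in> {..<k}" using k by simp
  hence kne: "{..<k} \<noteq> {}" by blast
  have N0: "N j \<eta> \<ge> 0" for j \<eta> unfolding N_def by (intro real_sqrt_ge_zero sum_nonneg) auto
  have Y0: "Y \<eta> \<ge> 0" for \<eta>
  proof -
    have "N 0 \<eta> \<le> Y \<eta>" unfolding Y_def using k0 by (intro Max_ge) auto
    thus ?thesis using N0[of 0 \<eta>] by linarith
  qed
  have Yp: "Y \<eta> ^ (2 * q) \<le> (\<Sum>j<k. (\<Sum>l<D. (\<Sum>i\<in>I. \<Sum>m\<in>M. \<eta> i m * y j l i m)\<^sup>2) ^ q)" for \<eta>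
  proof -
    have "Y \<eta> \<in> (\<lambda>j. N j \<eta>) ` {..<k}" unfolding Y_def using kne by (intro Max_in) auto
    then obtain j where j: "j < k" "Y \<eta> = N j \<eta>" by auto
    have "Y \<eta> ^ (2 * q) = (\<Sum>l<D. (\<Sum>i\<in>I. \<Sum>m\<in>M. \<eta> i m * y j l i m)\<^sup>2) ^ q"
    proof -
      have nn: "0 \<le> (\<Sum>l<D. (\<Sum>i\<in>I. \<Sum>m\<in>M. \<eta> i m * y j l i m)\<^sup>2)" by (intro sum_nonneg) auto
      show ?thesis unfolding j N_def power_mult using nn by simp
    qed
    also have "\<dots> \<le> (\<Sum>j<k. (\<Sum>l<D. (\<Sum>i\<in>I. \<Sum>m\<in>M. \<eta> i m * y j l i m)\<^sup>2) ^ q)"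
      by (rule member_le_sum) (use j in \<open>auto intro: zero_le_power[OF sum_nonneg[OF zero_le_power2]]\<close>)
    finally show ?thesis .
  qed
  have "(avg P Y) ^ (2 * q) \<le> avg P (\<lambda>\<eta>. Y \<eta> ^ (2 * q))"
    by (rule avg_jensen_pow[OF PP Y0])
  also have "\<dots> \<le> avg P (\<lambda>\<eta>. \<Sum>j<k. (\<Sum>l<D. (\<Sum>i\<in>I. \<Sum>m\<in>M. \<eta> i m * y j l i m)\<^sup>2) ^ q)"
    by (intro avg_mono Yp)
  also have "\<dots> = (\<Sum>j<k. avg P (\<lambda>\<eta>. (\<Sum>l<D. (\<Sum>i\<in>I. \<Sum>m\<in>M. \<eta> i m * y j l i m)\<^sup>2) ^ q))"
    by (rule avg_sum)
  also have "\<dots> \<le> (\<Sum>j<k. 2 * (2 * exp 1 * real q * s2) ^ q)"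
  proof (intro sum_mono)
    fix j assume "j \<in> {..<k}"
    hence "(\<Sum>l<D. \<Sum>i\<in>I. \<Sum>m\<in>M. (y j l i m)\<^sup>2) \<le> s2" using s2 by simp
    moreover have "0 \<le> (\<Sum>l<D. \<Sum>i\<in>I. \<Sum>m\<in>M. (y j l i m)\<^sup>2)" by (intro sum_nonneg) auto
    ultimately have "2 * (2 * exp 1 * real q * (\<Sum>l<D. \<Sum>i\<in>I. \<Sum>m\<in>M. (y j l i m)\<^sup>2)) ^ q \<le> 2 * (2 * exp 1 * real q * s2) ^ q"
      by (intro mult_left_mono power_mono) auto
    thus "avg P (\<lambda>\<eta>. (\<Sum>l<D. (\<Sum>i\<in>I. \<Sum>m\<in>M. \<eta> i m * y j l i m)\<^sup>2) ^ q) \<le> 2 * (2 * exp 1 * real q * s2) ^ q"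
      using mom_vec[OF I M q1, where D = D and c = "y j"] unfolding P_def by linarith
  qed
  also have "\<dots> = (2 * real k) * exp 1 ^ q * (2 * real q * s2) ^ q"
    by (simp add: power_mult_distrib)
  also have "\<dots> \<le> exp 1 ^ q * exp 1 ^ q * (2 * real q * s2) ^ q"
  proof -
    have "2 * real k \<le> exp (real q)"
    proof -
      have "2 * real k = exp (ln (2 * real k))" using k by simp
      also have "\<dots> \<le> exp (real q)" using qge by simp
      finally show ?thesis .
    qed
    hence "2 * real k \<le> exp 1 ^ q" by (simp add: exp_of_nat_mult[symmetric])
    thus ?thesis using s20 by (intro mult_right_mono) auto
  qed
  also have "\<dots> = ((exp 1)\<^sup>2 * (2 * real q * s2)) ^ q"
    by (simp add: power_mult_distrib power2_eq_square)
  also have "(exp 1)\<^sup>2 * (2 * real q * s2) = (exp 1 * sqrt (2 * real q * s2))\<^sup>2"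
    using s20 by (simp add: power_mult_distrib)
  also have "((exp 1 * sqrt (2 * real q * s2))\<^sup>2) ^ q = (exp 1 * sqrt (2 * real q * s2)) ^ (2 * q)"
    by (simp add: power_mult)
  finally have "avg P Y \<le> exp 1 * sqrt (2 * real q * s2)"
  proof -
    assume h: "avg P Y ^ (2 * q) \<le> (exp 1 * sqrt (2 * real q * s2)) ^ (2 * q)"
    have "0 \<le> avg P Y" by (intro avg_nonneg Y0)
    moreover have "0 \<le> exp 1 * sqrt (2 * real q * s2)" using s20 by simp
    ultimately show ?thesis using h power_mono_iff[of "avg P Y" "exp 1 * sqrt (2 * real q * s2)" "2 * q"] q1 by simp
  qed
  also have "\<dots> \<le> exp 1 * sqrt (6 * ln (2 * real k) * s2)"
    using qle lnk s20 by (intro mult_left_mono real_sqrt_le_mono mult_right_mono) auto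
  finally show ?thesis unfolding P_def Y_def N_def .
qed



lemma vnorm_L2: "vnorm m v = L2_set v {..<m}"
  unfolding vnorm_def L2_set_def by simp

lemma vnorm_nonneg: "vnorm m v \<ge> 0"
  unfolding vnorm_def by (simp add: sum_nonneg)

lemma vnorm_sq: "(vnorm m v)\<^sup>2 = (\<Sum>i<m. (v i)\<^sup>2)"
  unfolding vnorm_def by (simp add: sum_nonneg)

lemma cs: fixes a c :: "'b \<Rightarrow> real" shows "\<bar>\<Sum>j\<in>S. a j * c j\<bar> \<le> L2_set a S * L2_set c S"
proof -
  have "\<bar>\<Sum>j\<in>S. a j * c j\<bar> \<le> (\<Sum>j\<in>S. \<bar>a j\<bar> * \<bar>c j\<bar>)"
    unfolding abs_mult[symmetric] by (rule sum_abs)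
  also have "\<dots> \<le> L2_set a S * L2_set c S" by (rule L2_set_mult_ineq)
  finally show ?thesis .
qed

lemma cs_sq: fixes a c :: "'b \<Rightarrow> real" shows "(\<Sum>j\<in>S. a j * c j)\<^sup>2 \<le> (\<Sum>j\<in>S. (a j)\<^sup>2) * (\<Sum>j\<in>S. (c j)\<^sup>2)"
proof -
  have "(\<Sum>j\<in>S. a j * c j)\<^sup>2 = \<bar>\<Sum>j\<in>S. a j * c j\<bar>\<^sup>2" by simp
  also have "\<dots> \<le> (L2_set a S * L2_set c S)\<^sup>2"
    using cs[of a c S] by (intro power_mono) auto
  also have "\<dots> = (\<Sum>j\<in>S. (a j)\<^sup>2) * (\<Sum>j\<in>S. (c j)\<^sup>2)"
    unfolding L2_set_def by (simp add: power_mult_distrib sum_nonneg)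
  finally show ?thesis .
qed

lemma vnorm_cs: "\<bar>\<Sum>j<m. a j * c j\<bar> \<le> vnorm m a * vnorm m c"
  unfolding vnorm_L2 by (rule cs)

lemma mat_bound:
  "vnorm d (mat_apply k A y) \<le> sqrt (\<Sum>l<d. \<Sum>j<k. (A l j)\<^sup>2) * vnorm k y"
proof -
  have "(\<Sum>l<d. (mat_apply k A y l)\<^sup>2) \<le> (\<Sum>l<d. (\<Sum>j<k. (A l j)\<^sup>2) * (\<Sum>j<k. (y j)\<^sup>2))"
    unfolding mat_apply_def by (intro sum_mono cs_sq)
  also have "\<dots> = (\<Sum>l<d. \<Sum>j<k. (A l j)\<^sup>2) * (\<Sum>j<k. (y j)\<^sup>2)"
    by (simp add: sum_distrib_right)
  finally have "sqrt (\<Sum>l<d. (mat_apply k A y l)\<^sup>2) \<le> sqrt ((\<Sum>l<d. \<Sum>j<k. (A l j)\<^sup>2) * (\<Sum>j<k. (y j)\<^sup>2))"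
    by (rule real_sqrt_le_mono)
  thus ?thesis unfolding vnorm_def by (simp add: real_sqrt_mult)
qed

lemma opnorm_apply:
  assumes "opnorm d k A \<le> a'" "a' \<ge> 0"
  shows "vnorm d (mat_apply k A y) \<le> a' * vnorm k y"
proof -
  define S where "S = {vnorm d (mat_apply k A y) | y. vnorm k y \<le> 1}"
  define Fr where "Fr = sqrt (\<Sum>l<d. \<Sum>j<k. (A l j)\<^sup>2)"
  have Fr0: "Fr \<ge> 0" unfolding Fr_def by (simp add: sum_nonneg)
  have le: "vnorm d (mat_apply k A y) \<le> Fr" if "vnorm k y \<le> 1" for y
  proof -
    have "Fr * vnorm k y \<le> Fr * 1" using that Fr0 by (intro mult_left_mono) auto
    thus ?thesis using mat_bound[of d k A y] unfolding Fr_def by linarith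
  qed
  have bdd: "bdd_above S"
    unfolding S_def bdd_above_def using le by blast
  show ?thesis
  proof (cases "vnorm k y = 0")
    case True
    hence "(\<Sum>j<k. (y j)\<^sup>2) = 0" unfolding vnorm_def by (simp add: sum_nonneg)
    hence "\<forall>j\<in>{..<k}. y j = 0" by (subst (asm) sum_nonneg_eq_0_iff) auto
    hence "mat_apply k A y = (\<lambda>l. 0)" unfolding mat_apply_def by (auto intro: sum.neutral)
    thus ?thesis using True by (simp add: vnorm_def)
  next
    case False
    define r where "r = vnorm k y"
    have rp: "r > 0" using False vnorm_nonneg[of k y] unfolding r_def by simp
    define y' where "y' = (\<lambda>j. (1 / r) * y j)"
    have "vnorm k y' = (1 / r) * vnorm k y"
      unfolding y'_def vnorm_L2 using rp by (subst L2_set_right_distrib) auto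
    hence y'1: "vnorm k y' = 1" using rp unfolding r_def by simp
    have ma: "mat_apply k A y' = (\<lambda>l. (1 / r) * mat_apply k A y l)"
      unfolding mat_apply_def y'_def by (simp add: sum_distrib_left mult_ac)
    have e: "L2_set (\<lambda>l. (1/r) * mat_apply k A y l) {..<d} = (1/r) * L2_set (mat_apply k A y) {..<d}"
      using rp by (subst L2_set_right_distrib) auto
    have "vnorm d (mat_apply k A y') = (1 / r) * vnorm d (mat_apply k A y)"
      unfolding vnorm_L2 ma e ..
    moreover have "vnorm d (mat_apply k A y') \<in> S" unfolding S_def using y'1 by auto
    hence "vnorm d (mat_apply k A y') \<le> Sup S" using bdd by (rule cSup_upper)
    ultimately have "(1 / r) * vnorm d (mat_apply k A y) \<le> a'"
      using assms(1) unfolding opnorm_def S_def by simp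
    thus ?thesis using rp unfolding r_def by (simp add: field_simps)
  qed
qed

lemma matT_bound:
  assumes "opnorm d k A \<le> a'" "a' \<ge> 0"
  shows "vnorm k (matT_apply d A z) \<le> a' * vnorm d z"
proof -
  define w where "w = matT_apply d A z"
  have "(vnorm k w)\<^sup>2 = (\<Sum>j<k. w j * (\<Sum>l<d. A l j * z l))"
    unfolding vnorm_sq by (simp add: w_def matT_apply_def power2_eq_square)
  also have "\<dots> = (\<Sum>l<d. z l * mat_apply k A w l)"
    unfolding mat_apply_def by (simp add: sum_distrib_left sum.swap[of _ "{..<k}"] mult_ac)
  also have "\<dots> \<le> vnorm d z * vnorm d (mat_apply k A w)"
    using vnorm_cs[of z "mat_apply k A w" d] by linarith
  also have "\<dots> \<le> vnorm d z * (a' * vnorm k w)"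
    by (intro mult_left_mono opnorm_apply assms vnorm_nonneg)
  finally have h: "vnorm k w * vnorm k w \<le> (a' * vnorm d z) * vnorm k w"
    by (simp add: power2_eq_square mult_ac)
  show ?thesis
  proof (cases "vnorm k w = 0")
    case True thus ?thesis unfolding w_def using assms vnorm_nonneg[of d z] by simp
  next
    case False
    hence "vnorm k w > 0" using vnorm_nonneg[of k w] by simp
    thus ?thesis using h unfolding w_def by simp
  qed
qed

lemma col_le_norm21:
  assumes "j < k" shows "vnorm d (\<lambda>l. A l j) \<le> norm21 d k A"
  unfolding norm21_def using assms by (intro member_le_sum) (auto simp: vnorm_nonneg)

lemma matT_entry:
  "\<bar>matT_apply d A z j\<bar> \<le> vnorm d (\<lambda>l. A l j) * vnorm d z"
  unfolding matT_apply_def using vnorm_cs[of "\<lambda>l. A l j" z d] by simp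



lemma sum_Plus_k: "(\<Sum>m\<in>{..<k::nat} <+> {..<k}. h m) = (\<Sum>j<k. h (Inl j)) + (\<Sum>j<k. h (Inr j))"
  by (simp add: sum.Plus comp_def)

locale S =
  fixes n d k :: nat and \<phi> :: "real \<Rightarrow> real" and L b :: real and x x' :: "nat \<Rightarrow> nat \<Rightarrow> real" and a a' :: real
  assumes n1: "1 \<le> n" and d1: "1 \<le> d" and k1: "1 \<le> k" and lip: "L-lipschitz_on UNIV \<phi>"
    and \<phi>0: "\<phi> 0 = 0" and bp: "0 < b" and xb: "\<forall>i<n. vnorm d (x i) \<le> b \<and> vnorm d (x' i) \<le> b"
    and ap: "0 < a" and a'p: "0 < a'"
begin

definition "X = Jset d k a a'"
definition "f i A = zeta k (\<lambda>j. \<phi> (matT_apply d A (x i) j)) (\<lambda>j. \<phi> (matT_apply d A (x' i) j))"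
definition "G i A = case_sum (\<lambda>j. matT_apply d A (x i) j) (\<lambda>j. matT_apply d A (x' i) j)"
definition "\<kappa> = 8 * L\<^sup>2 * a' * b / real k"
definition "g i A m = \<kappa> * G i A m"
abbreviation "M \<equiv> {..<k} <+> {..<k}"

lemma L0: "L \<ge> 0" using lipschitz_on_nonneg[OF lip] .

lemma \<kappa>0: "\<kappa> \<ge> 0" unfolding \<kappa>_def using L0 a'p bp by simp

lemma phi_lip: "\<bar>\<phi> s - \<phi> t\<bar> \<le> L * \<bar>s - t\<bar>"
  using lipschitz_onD[OF lip, of s t] by (simp add: dist_real_def)

lemma phi_bd: "\<bar>\<phi> s\<bar> \<le> L * \<bar>s\<bar>"
  using phi_lip[of s 0] \<phi>0 by simp

lemma X_ne: "X \<noteq> {}"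
proof -
  have m0: "mat_apply k (\<lambda>_ _. 0) y = (\<lambda>_. 0)" for y unfolding mat_apply_def by simp
  have "{vnorm d (mat_apply k (\<lambda>_ _. 0) y) |y. vnorm k y \<le> 1} = {0}"
  proof -
    have "vnorm k (\<lambda>_. 0) \<le> 1" by (simp add: vnorm_def)
    thus ?thesis unfolding m0 by (auto simp: vnorm_def intro!: exI[of _ "\<lambda>_. 0"])
  qed
  hence "opnorm d k (\<lambda>_ _. 0) = 0" unfolding opnorm_def by simp
  moreover have "norm21 d k (\<lambda>_ _. 0) = 0" unfolding norm21_def by (simp add: vnorm_def)
  ultimately have "(\<lambda>_ _. 0) \<in> X" unfolding X_def Jset_def using ap a'p by simp
  thus ?thesis by blast
qed

lemma inX: "A \<in> X \<Longrightarrow> norm21 d k A \<le> a \<and> opnorm d k A \<le> a'"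
  unfolding X_def Jset_def by simp

lemma u_bd:
  assumes "A \<in> X" "i < n" "j < k"
  shows "\<bar>matT_apply d A (x i) j\<bar> \<le> a * b" "\<bar>matT_apply d A (x' i) j\<bar> \<le> a * b"
proof -
  have c: "vnorm d (\<lambda>l. A l j) \<le> a" using col_le_norm21[OF assms(3), of d A] inX[OF assms(1)] by linarith
  show "\<bar>matT_apply d A (x i) j\<bar> \<le> a * b"
    using matT_entry[of d A "x i" j] mult_mono[OF c conjunct1[OF xb[rule_format, OF assms(2)]]]
      vnorm_nonneg ap by (smt (verit))
  show "\<bar>matT_apply d A (x' i) j\<bar> \<le> a * b"
    using matT_entry[of d A "x' i" j] mult_mono[OF c conjunct2[OF xb[rule_format, OF assms(2)]]]
      vnorm_nonneg ap by (smt (verit))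
qed

lemma bnd_f: "i < n \<Longrightarrow> bnd X (f i)"
proof -
  assume i: "i < n"
  have "\<bar>f i A\<bar> \<le> (2 * L * a * b)\<^sup>2" if A: "A \<in> X" for A
  proof -
    have t: "(\<phi> (matT_apply d A (x i) j) - \<phi> (matT_apply d A (x' i) j))\<^sup>2 \<le> (2 * L * a * b)\<^sup>2" if j: "j < k" for j
    proof -
      have "\<bar>\<phi> (matT_apply d A (x i) j)\<bar> \<le> L * (a * b)"
        using phi_bd[of "matT_apply d A (x i) j"] mult_left_mono[OF u_bd(1)[OF A i j] L0] by linarith
      moreover have "\<bar>\<phi> (matT_apply d A (x' i) j)\<bar> \<le> L * (a * b)"
        using phi_bd[of "matT_apply d A (x' i) j"] mult_left_mono[OF u_bd(2)[OF A i j] L0] by linarith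
      ultimately have "\<bar>\<phi> (matT_apply d A (x i) j) - \<phi> (matT_apply d A (x' i) j)\<bar> \<le> 2 * L * a * b"
        by linarith
      thus ?thesis by (metis abs_ge_zero power2_abs power_mono)
    qed
    have "(\<Sum>j<k. (\<phi> (matT_apply d A (x i) j) - \<phi> (matT_apply d A (x' i) j))\<^sup>2) \<le> real k * (2 * L * a * b)\<^sup>2"
      using sum_mono[of "{..<k}", OF t] by simp
    moreover have "0 \<le> (\<Sum>j<k. (\<phi> (matT_apply d A (x i) j) - \<phi> (matT_apply d A (x' i) j))\<^sup>2)"
      by (intro sum_nonneg) auto
    ultimately show ?thesis unfolding f_def zeta_def using k1 by (simp add: field_simps)
  qed
  thus "bnd X (f i)" unfolding bnd_def by blast
qed

lemma bnd_g: "i < n \<Longrightarrow> m \<in> M \<Longrightarrow> bnd X (\<lambda>A. g i A m)"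
proof -
  assume i: "i < n" and m: "m \<in> M"
  have "\<bar>g i A m\<bar> \<le> \<kappa> * (a * b)" if A: "A \<in> X" for A
  proof -
    have "\<bar>G i A m\<bar> \<le> a * b" using m u_bd[OF A i] unfolding G_def by (cases m) auto
    thus ?thesis unfolding g_def using \<kappa>0 by (simp add: abs_mult mult_left_mono)
  qed
  thus "bnd X (\<lambda>A. g i A m)" unfolding bnd_def by blast
qed

end


lemma sq_diff_le: "((p::real) - q)\<^sup>2 \<le> 2 * p\<^sup>2 + 2 * q\<^sup>2"
proof -
  have "2 * p\<^sup>2 + 2 * q\<^sup>2 - (p - q)\<^sup>2 = (p + q)\<^sup>2" by (simp add: power2_eq_square algebra_simps)
  moreover have "0 \<le> (p + q)\<^sup>2" by simp
  ultimately show ?thesis by linarith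
qed

lemma sq_add_le: "((p::real) + q)\<^sup>2 \<le> 2 * p\<^sup>2 + 2 * q\<^sup>2"
  using sq_diff_le[of p "-q"] by simp

context S begin

lemma lipf:
  assumes i: "i < n" and A: "A \<in> X" and B: "B \<in> X"
  shows "\<bar>f i A - f i B\<bar> \<le> L2_set (\<lambda>m. g i A m - g i B m) M"
proof -
  define u where "u = (\<lambda>C j. matT_apply d C (x i) j)"
  define u' where "u' = (\<lambda>C j. matT_apply d C (x' i) j)"
  define D where "D = (\<lambda>C j. \<phi> (u C j) - \<phi> (u' C j))"
  have fD: "f i C = (1 / real k) * (\<Sum>j<k. (D C j)\<^sup>2)" for C
    unfolding f_def zeta_def D_def u_def u'_def ..
  have xx: "(\<Sum>l<d. (x i l - x' i l)\<^sup>2) \<le> 4 * b\<^sup>2"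
  proof -
    have "(\<Sum>l<d. (x i l - x' i l)\<^sup>2) \<le> (\<Sum>l<d. 2 * (x i l)\<^sup>2 + 2 * (x' i l)\<^sup>2)"
      by (intro sum_mono sq_diff_le)
    also have "\<dots> = 2 * (vnorm d (x i))\<^sup>2 + 2 * (vnorm d (x' i))\<^sup>2"
      by (simp add: vnorm_sq sum.distrib sum_distrib_left)
    also have "\<dots> \<le> 2 * b\<^sup>2 + 2 * b\<^sup>2"
      using xb i vnorm_nonneg by (intro add_mono mult_left_mono power_mono) auto
    finally show ?thesis by simp
  qed
  have sumD: "(\<Sum>j<k. (D C j)\<^sup>2) \<le> 4 * L\<^sup>2 * a'\<^sup>2 * b\<^sup>2" if C: "C \<in> X" for C
  proof -
    define z where "z = (\<lambda>l. x i l - x' i l)"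
    have uu: "u C j - u' C j = matT_apply d C z j" for j
      unfolding u_def u'_def z_def matT_apply_def by (simp add: sum_subtractf[symmetric] algebra_simps)
    have "(\<Sum>j<k. (D C j)\<^sup>2) \<le> (\<Sum>j<k. L\<^sup>2 * (matT_apply d C z j)\<^sup>2)"
    proof (intro sum_mono)
      fix j
      have "\<bar>D C j\<bar> \<le> L * \<bar>matT_apply d C z j\<bar>" unfolding D_def uu[symmetric] by (rule phi_lip)
      hence "\<bar>D C j\<bar>\<^sup>2 \<le> (L * \<bar>matT_apply d C z j\<bar>)\<^sup>2" by (intro power_mono) auto
      thus "(D C j)\<^sup>2 \<le> L\<^sup>2 * (matT_apply d C z j)\<^sup>2" by (simp add: power_mult_distrib)
    qed
    also have "\<dots> = L\<^sup>2 * (vnorm k (matT_apply d C z))\<^sup>2"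
      by (simp add: vnorm_sq sum_distrib_left)
    also have "\<dots> \<le> L\<^sup>2 * (a' * vnorm d z)\<^sup>2"
      using matT_bound[of d k C a' z] inX[OF C] a'p vnorm_nonneg
      by (intro mult_left_mono power_mono) auto
    also have "\<dots> = L\<^sup>2 * a'\<^sup>2 * (\<Sum>l<d. (z l)\<^sup>2)"
      by (simp add: power_mult_distrib vnorm_sq)
    also have "\<dots> \<le> L\<^sup>2 * a'\<^sup>2 * (4 * b\<^sup>2)"
      using xx unfolding z_def by (intro mult_left_mono) auto
    finally show ?thesis by simp
  qed
  define \<alpha> where "\<alpha> = (\<Sum>j<k. (D A j - D B j)\<^sup>2)"
  define \<beta> where "\<beta> = (\<Sum>j<k. (D A j + D B j)\<^sup>2)"
  define \<gamma> where "\<gamma> = (\<Sum>m\<in>M. (G i A m - G i B m)\<^sup>2)"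
  have \<gamma>0: "\<gamma> \<ge> 0" unfolding \<gamma>_def by (intro sum_nonneg) auto
  have \<gamma>e: "\<gamma> = (\<Sum>j<k. (u A j - u B j)\<^sup>2) + (\<Sum>j<k. (u' A j - u' B j)\<^sup>2)"
    unfolding \<gamma>_def sum_Plus_k G_def u_def u'_def by simp
  have diff: "f i A - f i B = (1 / real k) * (\<Sum>j<k. (D A j - D B j) * (D A j + D B j))"
  proof -
    have "(\<Sum>j<k. (D A j)\<^sup>2) - (\<Sum>j<k. (D B j)\<^sup>2) = (\<Sum>j<k. (D A j)\<^sup>2 - (D B j)\<^sup>2)"
      by (simp add: sum_subtractf)
    also have "\<dots> = (\<Sum>j<k. (D A j - D B j) * (D A j + D B j))"
      by (intro sum.cong refl) (simp add: power2_eq_square algebra_simps)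
    finally show ?thesis unfolding fD by (simp add: diff_divide_distrib[symmetric])
  qed
  have "\<bar>\<Sum>j<k. (D A j - D B j) * (D A j + D B j)\<bar> \<le> sqrt \<alpha> * sqrt \<beta>"
    using cs[of "\<lambda>j. D A j - D B j" "\<lambda>j. D A j + D B j" "{..<k}"] unfolding \<alpha>_def \<beta>_def L2_set_def .
  also have "sqrt \<alpha> * sqrt \<beta> \<le> 8 * L\<^sup>2 * a' * b * sqrt \<gamma>"
  proof -
    have \<beta>b: "\<beta> \<le> 16 * L\<^sup>2 * a'\<^sup>2 * b\<^sup>2"
    proof -
      have "\<beta> \<le> (\<Sum>j<k. 2 * (D A j)\<^sup>2 + 2 * (D B j)\<^sup>2)" unfolding \<beta>_def by (intro sum_mono sq_add_le)
      also have "\<dots> = 2 * (\<Sum>j<k. (D A j)\<^sup>2) + 2 * (\<Sum>j<k. (D B j)\<^sup>2)"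
        by (simp add: sum.distrib sum_distrib_left)
      also have "\<dots> \<le> 2 * (4 * L\<^sup>2 * a'\<^sup>2 * b\<^sup>2) + 2 * (4 * L\<^sup>2 * a'\<^sup>2 * b\<^sup>2)"
        using sumD[OF A] sumD[OF B] by linarith
      finally show ?thesis by simp
    qed
    have \<alpha>b: "\<alpha> \<le> 2 * L\<^sup>2 * \<gamma>"
    proof -
      have "\<alpha> \<le> (\<Sum>j<k. 2 * L\<^sup>2 * (u A j - u B j)\<^sup>2 + 2 * L\<^sup>2 * (u' A j - u' B j)\<^sup>2)"
        unfolding \<alpha>_def
      proof (intro sum_mono)
        fix j
        have e: "D A j - D B j = (\<phi> (u A j) - \<phi> (u B j)) - (\<phi> (u' A j) - \<phi> (u' B j))"
          unfolding D_def by simp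
        have p1: "(\<phi> (u A j) - \<phi> (u B j))\<^sup>2 \<le> L\<^sup>2 * (u A j - u B j)\<^sup>2"
        proof -
          have "\<bar>\<phi> (u A j) - \<phi> (u B j)\<bar>\<^sup>2 \<le> (L * \<bar>u A j - u B j\<bar>)\<^sup>2" by (intro power_mono phi_lip) auto
          thus ?thesis by (simp add: power_mult_distrib)
        qed
        have p2: "(\<phi> (u' A j) - \<phi> (u' B j))\<^sup>2 \<le> L\<^sup>2 * (u' A j - u' B j)\<^sup>2"
        proof -
          have "\<bar>\<phi> (u' A j) - \<phi> (u' B j)\<bar>\<^sup>2 \<le> (L * \<bar>u' A j - u' B j\<bar>)\<^sup>2" by (intro power_mono phi_lip) auto
          thus ?thesis by (simp add: power_mult_distrib)
        qed
        show "(D A j - D B j)\<^sup>2 \<le> 2 * L\<^sup>2 * (u A j - u B j)\<^sup>2 + 2 * L\<^sup>2 * (u' A j - u' B j)\<^sup>2"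
          unfolding e using sq_diff_le[of "\<phi> (u A j) - \<phi> (u B j)" "\<phi> (u' A j) - \<phi> (u' B j)"] p1 p2
          by linarith
      qed
      also have "\<dots> = 2 * L\<^sup>2 * \<gamma>" unfolding \<gamma>e by (simp add: sum.distrib sum_distrib_left algebra_simps)
      finally show ?thesis .
    qed
    have \<alpha>0: "\<alpha> \<ge> 0" unfolding \<alpha>_def by (intro sum_nonneg) auto
    have \<beta>0: "\<beta> \<ge> 0" unfolding \<beta>_def by (intro sum_nonneg) auto
    have "\<alpha> * \<beta> \<le> (2 * L\<^sup>2 * \<gamma>) * (16 * L\<^sup>2 * a'\<^sup>2 * b\<^sup>2)"
      using \<alpha>b \<beta>b \<alpha>0 \<beta>0 \<gamma>0 by (intro mult_mono) auto
    also have "\<dots> \<le> (8 * L\<^sup>2 * a' * b)\<^sup>2 * \<gamma>"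
    proof -
      define W where "W = L\<^sup>2 * L\<^sup>2 * a'\<^sup>2 * b\<^sup>2 * \<gamma>"
      have W0: "W \<ge> 0" unfolding W_def using \<gamma>0 by simp
      have e1: "(2 * L\<^sup>2 * \<gamma>) * (16 * L\<^sup>2 * a'\<^sup>2 * b\<^sup>2) = 32 * W"
        unfolding W_def by (simp add: power2_eq_square algebra_simps)
      have e2: "(8 * L\<^sup>2 * a' * b)\<^sup>2 * \<gamma> = 64 * W"
        unfolding W_def by (simp add: power2_eq_square algebra_simps)
      show ?thesis unfolding e1 e2 using W0 by simp
    qed
    finally have "sqrt (\<alpha> * \<beta>) \<le> sqrt ((8 * L\<^sup>2 * a' * b)\<^sup>2 * \<gamma>)" by (rule real_sqrt_le_mono)
    also have "\<dots> = 8 * L\<^sup>2 * a' * b * sqrt \<gamma>"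
      using a'p bp by (simp add: real_sqrt_mult)
    finally show ?thesis by (simp add: real_sqrt_mult)
  qed
  finally have h: "\<bar>\<Sum>j<k. (D A j - D B j) * (D A j + D B j)\<bar> \<le> 8 * L\<^sup>2 * a' * b * sqrt \<gamma>" .
  have "\<bar>f i A - f i B\<bar> \<le> (1 / real k) * (8 * L\<^sup>2 * a' * b * sqrt \<gamma>)"
    unfolding diff using h by (simp add: abs_mult divide_right_mono)
  also have "\<dots> = \<kappa> * sqrt \<gamma>" unfolding \<kappa>_def by simp
  also have "\<dots> = L2_set (\<lambda>m. g i A m - g i B m) M"
  proof -
    have "L2_set (\<lambda>m. g i A m - g i B m) M = L2_set (\<lambda>m. \<kappa> * (G i A m - G i B m)) M"
      unfolding g_def by (simp add: algebra_simps)
    also have "\<dots> = \<kappa> * L2_set (\<lambda>m. G i A m - G i B m) M"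
      using \<kappa>0 by (simp add: L2_set_right_distrib)
    finally show ?thesis unfolding \<gamma>_def L2_set_def by simp
  qed
  finally show ?thesis .
qed

end


context S begin

definition "y j l i m = case_sum (\<lambda>j'. if j' = j then x i l else 0) (\<lambda>j'. if j' = j then x' i l else 0) m"
definition "T \<eta> j l = (\<Sum>i<n. \<Sum>m\<in>M. \<eta> i m * y j l i m)"
definition "Y \<eta> = Max ((\<lambda>j. sqrt (\<Sum>l<d. (T \<eta> j l)\<^sup>2)) ` {..<k})"

lemma sum_delta_mult:
  assumes "(j::nat) < k"
  shows "(\<Sum>j'<k. c j' * (if j' = j then v else 0)) = c j * (v::real)"
proof -
  have "(\<Sum>j'<k. c j' * (if j' = j then v else 0)) = (\<Sum>j'<k. if j' = j then c j * v else 0)"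
    by (intro sum.cong) auto
  also have "\<dots> = c j * v" using assms by simp
  finally show ?thesis .
qed

lemma sum_delta_sq:
  assumes "(j::nat) < k"
  shows "(\<Sum>j'<k. (if j' = j then v else 0)\<^sup>2) = (v::real)\<^sup>2"
proof -
  have "(\<Sum>j'<k. (if j' = j then v else 0)\<^sup>2) = (\<Sum>j'<k. if j' = j then v\<^sup>2 else 0)"
    by (intro sum.cong) auto
  also have "\<dots> = v\<^sup>2" using assms by simp
  finally show ?thesis .
qed

lemma T_eq: "j < k \<Longrightarrow> T \<eta> j l = (\<Sum>i<n. \<eta> i (Inl j) * x i l + \<eta> i (Inr j) * x' i l)"
  unfolding T_def y_def sum_Plus_k by (simp add: sum_delta_mult)

lemma Y_ge: "j < k \<Longrightarrow> vnorm d (T \<eta> j) \<le> Y \<eta>"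
  unfolding Y_def vnorm_def by (intro Max_ge) auto

lemma Y0: "Y \<eta> \<ge> 0"
  using Y_ge[of 0 \<eta>] vnorm_nonneg[of d "T \<eta> 0"] k1 by simp

lemma lin:
  assumes A: "A \<in> X"
  shows "(\<Sum>i<n. \<Sum>m\<in>M. \<eta> i m * g i A m) \<le> \<kappa> * (a * Y \<eta>)"
proof -
  have e1: "(\<Sum>i<n. \<Sum>m\<in>M. \<eta> i m * g i A m) = \<kappa> * (\<Sum>i<n. \<Sum>m\<in>M. \<eta> i m * G i A m)"
    unfolding g_def sum_distrib_left by (intro sum.cong refl) (simp only: mult.left_commute)
  have e2: "(\<Sum>i<n. \<Sum>m\<in>M. \<eta> i m * G i A m)
      = (\<Sum>i<n. \<Sum>j<k. \<Sum>l<d. A l j * (\<eta> i (Inl j) * x i l + \<eta> i (Inr j) * x' i l))"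
  proof (intro sum.cong refl)
    fix i
    have "(\<Sum>m\<in>M. \<eta> i m * G i A m) = (\<Sum>j<k. \<eta> i (Inl j) * (\<Sum>l<d. A l j * x i l)) + (\<Sum>j<k. \<eta> i (Inr j) * (\<Sum>l<d. A l j * x' i l))"
      unfolding sum_Plus_k G_def matT_apply_def by simp
    also have "\<dots> = (\<Sum>j<k. \<Sum>l<d. A l j * (\<eta> i (Inl j) * x i l + \<eta> i (Inr j) * x' i l))"
      unfolding sum.distrib[symmetric] sum_distrib_left by (intro sum.cong refl) (simp add: distrib_left mult_ac)
    finally show "(\<Sum>m\<in>M. \<eta> i m * G i A m) = (\<Sum>j<k. \<Sum>l<d. A l j * (\<eta> i (Inl j) * x i l + \<eta> i (Inr j) * x' i l))" .
  qed
  also have "\<dots> = (\<Sum>j<k. \<Sum>l<d. A l j * T \<eta> j l)"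
  proof -
    have "(\<Sum>i<n. \<Sum>j<k. \<Sum>l<d. A l j * (\<eta> i (Inl j) * x i l + \<eta> i (Inr j) * x' i l))
        = (\<Sum>j<k. \<Sum>l<d. \<Sum>i<n. A l j * (\<eta> i (Inl j) * x i l + \<eta> i (Inr j) * x' i l))"
      by (rule trans[OF sum.swap], rule sum.cong[OF refl], rule sum.swap)
    also have "\<dots> = (\<Sum>j<k. \<Sum>l<d. A l j * T \<eta> j l)"
      by (intro sum.cong refl) (simp add: T_eq sum_distrib_left)
    finally show ?thesis .
  qed
  also have "\<dots> \<le> (\<Sum>j<k. vnorm d (\<lambda>l. A l j) * Y \<eta>)"
  proof (intro sum_mono)
    fix j assume j: "j \<in> {..<k}"
    have "(\<Sum>l<d. A l j * T \<eta> j l) \<le> vnorm d (\<lambda>l. A l j) * vnorm d (T \<eta> j)"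
      using vnorm_cs[of "\<lambda>l. A l j" "T \<eta> j" d] by linarith
    also have "\<dots> \<le> vnorm d (\<lambda>l. A l j) * Y \<eta>"
      using j by (intro mult_left_mono Y_ge vnorm_nonneg) auto
    finally show "(\<Sum>l<d. A l j * T \<eta> j l) \<le> vnorm d (\<lambda>l. A l j) * Y \<eta>" .
  qed
  also have "\<dots> = norm21 d k A * Y \<eta>" unfolding norm21_def by (simp add: sum_distrib_right)
  also have "\<dots> \<le> a * Y \<eta>" using inX[OF A] Y0 by (intro mult_right_mono) auto
  finally show ?thesis unfolding e1 using \<kappa>0 by (intro mult_left_mono) auto
qed

lemma y_sq:
  assumes "j < k"
  shows "(\<Sum>l<d. \<Sum>i<n. \<Sum>m\<in>M. (y j l i m)\<^sup>2) \<le> 2 * real n * b\<^sup>2"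
proof -
  have "(\<Sum>m\<in>M. (y j l i m)\<^sup>2) = (x i l)\<^sup>2 + (x' i l)\<^sup>2" for l i
    unfolding y_def sum_Plus_k using assms by (simp add: sum_delta_sq)
  hence "(\<Sum>l<d. \<Sum>i<n. \<Sum>m\<in>M. (y j l i m)\<^sup>2) = (\<Sum>i<n. (vnorm d (x i))\<^sup>2 + (vnorm d (x' i))\<^sup>2)"
    by (simp add: vnorm_sq sum.swap[of _ "{..<d}"] sum.distrib)
  also have "\<dots> \<le> (\<Sum>i<n. b\<^sup>2 + b\<^sup>2)"
    using xb vnorm_nonneg by (intro sum_mono add_mono power_mono) auto
  finally show ?thesis by simp
qed

end


context S begin

lemma main:
  "rademacher n (Fk d k \<phi> x x' (Jset d k a a'))
    \<le> (1 / real n) * (2 * \<kappa> * a) * (exp 1 * sqrt (6 * ln (2 * real k) * (2 * real n * b\<^sup>2)))"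
proof -
  define P where "P = PiE {..<n} (\<lambda>_. sg M)"
  have card: "card (sg {..<n}) = 2 ^ n" by (simp add: card_PiE numeral_2_eq_2)
  have "rademacher n (Fk d k \<phi> x x' (Jset d k a a'))
     = (1 / real n) * avg (sg {..<n}) (\<lambda>\<epsilon>. Sup ((\<lambda>A. (\<lambda>_. 0) A + (\<Sum>i\<in>{..<n}. \<epsilon> i * f i A)) ` X))"
    unfolding rademacher_def avg_def card Fk_def X_def f_def by (simp add: image_image)
  also have "\<dots> \<le> (1 / real n) * avg P (\<lambda>\<eta>. Sup ((\<lambda>A. (\<lambda>_. 0) A + 2 * (\<Sum>i\<in>{..<n}. \<Sum>m\<in>M. \<eta> i m * g i A m)) ` X))"
    unfolding P_def using n1
    by (intro mult_left_mono contraction X_ne bnd_f bnd_g lipf) (auto simp: bnd_def)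
  also have "\<dots> \<le> (1 / real n) * avg P (\<lambda>\<eta>. (2 * \<kappa> * a) * Y \<eta>)"
  proof (intro mult_left_mono avg_mono)
    fix \<eta>
    show "Sup ((\<lambda>A. (\<lambda>_. 0) A + 2 * (\<Sum>i\<in>{..<n}. \<Sum>m\<in>M. \<eta> i m * g i A m)) ` X) \<le> 2 * \<kappa> * a * Y \<eta>"
      using lin[of _ \<eta>] X_ne by (intro cSUP_least) (auto simp: mult_ac)
  qed simp
  also have "\<dots> = (1 / real n) * (2 * \<kappa> * a) * avg P Y"
    by (simp add: avg_cmult)
  also have "\<dots> \<le> (1 / real n) * (2 * \<kappa> * a) * (exp 1 * sqrt (6 * ln (2 * real k) * (2 * real n * b\<^sup>2)))"
  proof (intro mult_left_mono)
    show "avg P Y \<le> exp 1 * sqrt (6 * ln (2 * real k) * (2 * real n * b\<^sup>2))"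
      unfolding P_def Y_def T_def vnorm_def
      by (rule emax[where y = y]) (use k1 y_sq in auto)
  qed (use \<kappa>0 ap in auto)
  finally show ?thesis .
qed

end


lemma final_arith:
  fixes n d k :: nat and L b a a' :: real
  assumes n1: "1 \<le> n" and d1: "1 \<le> d" and k1: "1 \<le> k" and L0: "L \<ge> 0" and bp: "0 < b" and ap: "0 < a" and a'p: "0 < a'"
  shows "(1 / real n) * (2 * (8 * L\<^sup>2 * a' * b / real k) * a) * (exp 1 * sqrt (6 * ln (2 * real k) * (2 * real n * b\<^sup>2)))
    \<le> 300 * (1 / real n + a * a' * b\<^sup>2 * L\<^sup>2 / (real k * sqrt (real n))
                  * sqrt (ln (2 * real d * real k))
                  * ln (2 + real n * b\<^sup>2 * a'\<^sup>2 * L\<^sup>2 / real k))"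
proof -
  define s where "s = sqrt (real n)"
  define Q where "Q = a * a' * b\<^sup>2 * L\<^sup>2 / real k"
  define l where "l = sqrt (ln (2 * real k))"
  have sp: "s > 0" unfolding s_def using n1 by simp
  have ns: "real n = s\<^sup>2" unfolding s_def by simp
  have Q0: "Q \<ge> 0" unfolding Q_def using ap a'p by simp
  have lnk: "ln (2 * real k) \<ge> 0" using k1 by (intro ln_ge_zero) simp
  have l0: "l \<ge> 0" unfolding l_def using lnk by simp
  have sq: "sqrt (6 * ln (2 * real k) * (2 * real n * b\<^sup>2)) = sqrt 12 * l * s * b"
    unfolding l_def s_def using bp by (simp add: real_sqrt_mult)
  have "(1 / real n) * (2 * (8 * L\<^sup>2 * a' * b / real k) * a) * (exp 1 * sqrt (6 * ln (2 * real k) * (2 * real n * b\<^sup>2)))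
      = (16 * exp 1 * sqrt 12) * (Q * l / s)"
    using sp k1 by (unfold sq, unfold ns Q_def) (simp add: field_simps power2_eq_square)
  also have "\<dots> \<le> 200 * (Q * l / s)"
  proof -
    have "sqrt 12 \<le> sqrt 16" by (rule real_sqrt_le_mono) simp
    hence s12: "sqrt 12 \<le> 4" by simp
    have "16 * exp 1 * sqrt 12 \<le> 16 * 3 * 4"
      using exp_le s12 by (intro mult_mono) auto
    thus ?thesis using Q0 l0 sp by (intro mult_right_mono) auto
  qed
  also have "\<dots> = 300 * ((Q / s) * l * (2/3))" by simp
  also have "\<dots> \<le> 300 * ((Q / s) * sqrt (ln (2 * real d * real k)) * ln (2 + real n * b\<^sup>2 * a'\<^sup>2 * L\<^sup>2 / real k))"
  proof -
    have "l \<le> sqrt (ln (2 * real d * real k))"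
      unfolding l_def using d1 k1 by (intro real_sqrt_le_mono) (simp add: mult_le_cancel_left1 mult_right_mono)
    moreover have "2/3 \<le> ln (2 + real n * b\<^sup>2 * a'\<^sup>2 * L\<^sup>2 / real k)"
    proof -
      have t0: "0 \<le> real n * b\<^sup>2 * a'\<^sup>2 * L\<^sup>2 / real k" by simp
      have "ln 2 \<le> ln (2 + real n * b\<^sup>2 * a'\<^sup>2 * L\<^sup>2 / real k)" 
      proof -
        have p: "0 < 2 + real n * b\<^sup>2 * a'\<^sup>2 * L\<^sup>2 / real k" using t0 by linarith
        show ?thesis using t0 by (subst ln_le_cancel_iff[OF _ p]) auto
      qed
      thus ?thesis using ln2_ge_two_thirds by linarith
    qed
    moreover have "0 \<le> sqrt (ln (2 * real d * real k))" using l0 calculation(1) by linarith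
    ultimately show ?thesis using Q0 sp l0
      by (intro mult_left_mono mult_mono) auto
  qed
  also have "\<dots> \<le> 300 * (1 / real n + a * a' * b\<^sup>2 * L\<^sup>2 / (real k * sqrt (real n))
                  * sqrt (ln (2 * real d * real k))
                  * ln (2 + real n * b\<^sup>2 * a'\<^sup>2 * L\<^sup>2 / real k))"
    unfolding Q_def s_def by (simp add: field_simps)
  finally show ?thesis .
qed

theorem theorem1:
  shows "\<exists>C>0. \<forall>(n::nat) (d::nat) (k::nat) (\<phi>::real\<Rightarrow>real) (L::real) (b::real)
            (x::nat\<Rightarrow>nat\<Rightarrow>real) (x'::nat\<Rightarrow>nat\<Rightarrow>real) (a::real) (a'::real).
     1 \<le> n \<and> 1 \<le> d \<and> 1 \<le> k \<and> L-lipschitz_on UNIV \<phi> \<and> \<phi> 0 = 0 \<and> 0 < b \<and>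
     (\<forall>i<n. vnorm d (x i) \<le> b \<and> vnorm d (x' i) \<le> b) \<and> 0 < a \<and> 0 < a'
     \<longrightarrow> rademacher n (Fk d k \<phi> x x' (Jset d k a a'))
         \<le> C * (1 / real n + a * a' * b\<^sup>2 * L\<^sup>2 / (real k * sqrt (real n))
                  * sqrt (ln (2 * real d * real k))
                  * ln (2 + real n * b\<^sup>2 * a'\<^sup>2 * L\<^sup>2 / real k))"
proof (intro exI[of _ 300] conjI allI impI)
  fix n d k :: nat and \<phi> :: "real \<Rightarrow> real" and L b :: real and x x' :: "nat \<Rightarrow> nat \<Rightarrow> real" and a a' :: real
  assume h: "1 \<le> n \<and> 1 \<le> d \<and> 1 \<le> k \<and> L-lipschitz_on UNIV \<phi> \<and> \<phi> 0 = 0 \<and> 0 < b \<and>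
     (\<forall>i<n. vnorm d (x i) \<le> b \<and> vnorm d (x' i) \<le> b) \<and> 0 < a \<and> 0 < a'"
  interpret S n d k \<phi> L b x x' a a' using h by unfold_locales auto
  show "rademacher n (Fk d k \<phi> x x' (Jset d k a a'))
         \<le> 300 * (1 / real n + a * a' * b\<^sup>2 * L\<^sup>2 / (real k * sqrt (real n))
                  * sqrt (ln (2 * real d * real k))
                  * ln (2 + real n * b\<^sup>2 * a'\<^sup>2 * L\<^sup>2 / real k))"
    using main final_arith[of n d k L b a a'] h L0 unfolding \<kappa>_def by linarith
qed simp

end
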